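(* Let $F_n$ be free on $f_1,\dots,f_n$, let $0\le k\le n$, and identify $B_k\times B_{n-k}$ with the subgroup of $B_n$ generated by $\sigma_i$ for $i\in\{1,\dots,n-1\}\setminus\{k\}$ via $(\sigma_i,1)\mapsto\sigma_i$, $(1,\sigma_j)\mapsto\sigma_{k+j}$. For $\beta\in B_n$, the following are equivalent: (1) $\beta\in B_k\times B_{n-k}$; (2) the first $k$ entries of $\beta\cdot(f_1,\dots,f_n)$ lie in $\langle f_1,\dots,f_k\rangle$ and the last $n-k$ entries lie in $\langle f_{k+1},\dots,f_n\rangle$.
   Context: The Hurwitz action of $B_n=\langle\sigma_1,\dots,\sigma_{n-1}\rangle$ on $G^n$ is $\sigma_i\cdot(g_1,\dots,g_n)=(g_1,\dots,g_{i-1},g_ig_{i+1}g_i^{-1},g_i,g_{i+2},\dots,g_n)$, $\sigma_i^{-1}\cdot(g_1,\dots,g_n)=(g_1,\dots,g_{i-1},g_{i+1},g_{i+1}^{-1}g_ig_{i+1},g_{i+2},\dots,g_n)$. $B_0$ and $B_1$ are trivial. *)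

theory Defs
  imports Main
begin

(* Letters: (index, inverted?).  (j, False) = generator, (j, True) = its inverse.
   Used both for the free group F_n (generators f_j, j = 1..n) and for braid
   words (generators sigma_i, i = 1..n-1). *)
type_synonym letter = "nat \<times> bool"

fun cancel :: "letter \<Rightarrow> letter list \<Rightarrow> letter list" where
  "cancel x [] = [x]"
| "cancel x (y # ys) = (if fst x = fst y \<and> snd x \<noteq> snd y then ys else x # y # ys)"

definition fred :: "letter list \<Rightarrow> letter list" where
  "fred w = foldr cancel w []"

definition fmul :: "letter list \<Rightarrow> letter list \<Rightarrow> letter list" where
  "fmul a b = fred (a @ b)"

definition finv :: "letter list \<Rightarrow> letter list" where
  "finv a = rev (map (\<lambda>(i, e). (i, \<not> e)) a)"

definition gen_sub :: "nat set \<Rightarrow> letter list set" where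
  "gen_sub S = {fred w | w. \<forall>l \<in> set w. fst l \<in> S}"

definition free_basis :: "nat \<Rightarrow> letter list list" where
  "free_basis n = map (\<lambda>j. [(j, False)]) [1..<n+1]"

definition braid_words :: "nat \<Rightarrow> letter list set" where
  "braid_words n = {w. \<forall>l \<in> set w. 1 \<le> fst l \<and> fst l < n}"

(* congruence on words generated by free cancellation and the braid relations;
   B_n = braid_words n modulo braid_eq n *)
inductive braid_eq :: "nat \<Rightarrow> letter list \<Rightarrow> letter list \<Rightarrow> bool" for n where
  refl: "braid_eq n w w"
| sym: "braid_eq n u v \<Longrightarrow> braid_eq n v u"
| trans: "braid_eq n u v \<Longrightarrow> braid_eq n v w \<Longrightarrow> braid_eq n u w"
| ctxt: "braid_eq n u v \<Longrightarrow> braid_eq n (a @ u @ b) (a @ v @ b)"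
| cancel_rel: "1 \<le> i \<Longrightarrow> i < n \<Longrightarrow> braid_eq n [(i, e), (i, \<not> e)] []"
| far_comm: "1 \<le> i \<Longrightarrow> i < n \<Longrightarrow> 1 \<le> j \<Longrightarrow> j < n \<Longrightarrow> i + 2 \<le> j \<Longrightarrow>
     braid_eq n [(i, False), (j, False)] [(j, False), (i, False)]"
| braid_rel: "1 \<le> i \<Longrightarrow> i + 1 < n \<Longrightarrow>
     braid_eq n [(i, False), (i+1, False), (i, False)] [(i+1, False), (i, False), (i+1, False)]"

definition in_Bk_Bnk :: "nat \<Rightarrow> nat \<Rightarrow> letter list \<Rightarrow> bool" where
  "in_Bk_Bnk n k \<beta> \<longleftrightarrow>
     (\<exists>w \<in> braid_words n. (\<forall>l \<in> set w. fst l \<noteq> k) \<and> braid_eq n \<beta> w)"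

(* ---------- Hurwitz action on F_n^n (tuples as lists, 1-indexed sigma_i
   acting on list positions i-1, i) ---------- *)
fun hur_letter :: "letter \<Rightarrow> letter list list \<Rightarrow> letter list list" where
  "hur_letter (i, False) x =
     x[i - 1 := fmul (fmul (x ! (i - 1)) (x ! i)) (finv (x ! (i - 1))), i := x ! (i - 1)]"
| "hur_letter (i, True) x =
     x[i - 1 := x ! i, i := fmul (fmul (finv (x ! i)) (x ! (i - 1))) (x ! i)]"

fun hurwitz :: "letter list \<Rightarrow> letter list list \<Rightarrow> letter list list" where
  "hurwitz [] x = x"
| "hurwitz (s # w) x = hur_letter s (hurwitz w x)"

end

theory Submission
  imports Defs
begin

definition cancels :: "letter \<Rightarrow> letter \<Rightarrow> bool" where
  "cancels x y \<longleftrightarrow> fst x = fst y \<and> snd x \<noteq> snd y"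

fun red :: "letter list \<Rightarrow> bool" where
  "red [] = True"
| "red [x] = True"
| "red (x # y # ys) = (\<not> cancels x y \<and> red (y # ys))"

lemma red_tl: "red (x # ys) \<Longrightarrow> red ys"
  by (cases ys) auto

lemma cancel_simp: "cancel x (y # ys) = (if cancels x y then ys else x # y # ys)"
  by (simp add: cancels_def)

declare cancel.simps(2)[simp del]

lemma red_cancel: "red ys \<Longrightarrow> red (cancel x ys)"
  by (cases ys) (auto simp: cancel_simp dest: red_tl)

lemma red_foldr: "red r \<Longrightarrow> red (foldr cancel w r)"
  by (induction w) (auto intro: red_cancel)

lemma red_fred[simp]: "red (fred w)"
  unfolding fred_def by (rule red_foldr) simp

lemma fred_red: "red w \<Longrightarrow> fred w = w"
proof (induction w)
  case Nil then show ?case by (simp add: fred_def)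
next
  case (Cons x w)
  then have "fred w = w" using red_tl by blast
  then show ?case using Cons.prems
    by (cases w) (auto simp: fred_def cancel_simp)
qed

lemma fred_fred[simp]: "fred (fred w) = fred w"
  by (simp add: fred_red)

lemma cancels_sym: "cancels x y \<Longrightarrow> cancels y x"
  by (auto simp: cancels_def)

lemma cancel_cancel: "red r \<Longrightarrow> cancels x y \<Longrightarrow> cancel x (cancel y r) = r"
proof (cases r)
  case Nil
  assume "cancels x y" then show ?thesis using Nil by (simp add: cancel_simp)
next
  case (Cons z r')
  assume R: "red r" and C: "cancels x y"
  show ?thesis
  proof (cases "cancels y z")
    case True
    then have "z = x" using C by (cases x, cases z, cases y) (auto simp: cancels_def)
    then show ?thesis using R True Cons
      by (cases r') (auto simp: cancel_simp)
  next
    case False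
    then show ?thesis using Cons C by (simp add: cancel_simp)
  qed
qed

lemma foldr_cancel_cancel:
  assumes "red z" "red r"
  shows "foldr cancel (cancel x z) r = cancel x (foldr cancel z r)"
proof (cases z)
  case Nil then show ?thesis by simp
next
  case (Cons y z')
  show ?thesis
  proof (cases "cancels x y")
    case True
    have "red (foldr cancel z' r)" using assms by (intro red_foldr)
    then show ?thesis using True Cons by (simp add: cancel_simp cancel_cancel)
  next
    case False then show ?thesis using Cons by (simp add: cancel_simp)
  qed
qed

lemma foldr_cancel_fred: "red r \<Longrightarrow> foldr cancel (fred a) r = foldr cancel a r"
proof (induction a)
  case Nil then show ?case by (simp add: fred_def)
next
  case (Cons x a)
  have "foldr cancel (fred (x # a)) r = foldr cancel (cancel x (fred a)) r"
    by (simp add: fred_def)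
  also have "\<dots> = cancel x (foldr cancel (fred a) r)"
    using Cons.prems by (intro foldr_cancel_cancel) auto
  also have "\<dots> = foldr cancel (x # a) r" using Cons by simp
  finally show ?case .
qed

lemma fred_append: "fred (a @ b) = foldr cancel a (fred b)"
  by (simp add: fred_def)

lemma fred_fred_l[simp]: "fred (fred a @ b) = fred (a @ b)"
  by (simp add: fred_append foldr_cancel_fred)

lemma fred_fred_r[simp]: "fred (a @ fred b) = fred (a @ b)"
  by (simp add: fred_append)

lemma fred_Cons: "fred (x # w) = cancel x (fred w)"
  by (simp add: fred_def)

lemma finv_Cons: "finv (x # w) = finv w @ [(fst x, \<not> snd x)]"
  by (cases x) (simp add: finv_def)

lemma finv_append: "finv (a @ b) = finv b @ finv a"
  by (simp add: finv_def)

lemma finv_finv[simp]: "finv (finv a) = a"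
  by (induction a) (auto simp: finv_def)

lemma finv_Nil[simp]: "finv [] = []" by (simp add: finv_def)

lemma fred_inv_cancel: "fred (finv w @ w) = []"
proof (induction w)
  case Nil then show ?case by (simp add: fred_def)
next
  case (Cons x w)
  have "fred (finv (x # w) @ x # w) = foldr cancel (finv w) (cancel (fst x, \<not> snd x) (cancel x (fred w)))"
    by (simp add: finv_Cons fred_append fred_Cons)
  also have "\<dots> = foldr cancel (finv w) (fred w)"
    by (subst cancel_cancel) (auto simp: cancels_def)
  also have "\<dots> = []" using Cons by (simp add: fred_append)
  finally show ?case .
qed

lemma fred_cancel_inv: "fred (w @ finv w) = []"
  using fred_inv_cancel[of "finv w"] by simp

lemma set_cancel: "set (cancel x r) \<subseteq> insert x (set r)"
  by (cases r) (auto simp: cancel_simp)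

lemma set_foldr_cancel: "set (foldr cancel w r) \<subseteq> set w \<union> set r"
  by (induction w) (use set_cancel in fastforce)+

lemma set_fred: "set (fred w) \<subseteq> set w"
  using set_foldr_cancel[of w "[]"] by (simp add: fred_def)

lemma red_append: "red (a @ b) \<longleftrightarrow> red a \<and> red b \<and> (a = [] \<or> b = [] \<or> \<not> cancels (last a) (hd b))"
proof (induction a rule: red.induct)
  case 1 then show ?case by simp
next
  case (2 x) then show ?case by (cases b) auto
next
  case (3 x y ys) then show ?case by auto
qed

lemma red_finv: "red w \<Longrightarrow> red (finv w)"
proof (induction w)
  case Nil then show ?case by simp
next
  case (Cons x w)
  have rw: "red w" using Cons.prems red_tl by blast
  show ?case
  proof (cases w)
    case Nil then show ?thesis by (simp add: finv_def)
  next
    case (Cons y w')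
    have "last (finv w) = (fst y, \<not> snd y)" using Cons by (simp add: finv_Cons)
    moreover have "\<not> cancels x y" using Cons.prems Cons by simp
    ultimately show ?thesis using Cons.IH rw Cons
      by (simp only: finv_Cons red_append) (auto simp: cancels_def)
  qed
qed

typedef fg = "{w. red w}" morphisms rep Abs_fg
  by (rule exI[of _ "[]"]) simp


lemma red_rep[simp]: "red (rep g)" using rep by simp
lemma Abs_fg_inverse'[simp]: "red w \<Longrightarrow> rep (Abs_fg w) = w"
  by (simp add: Abs_fg_inverse)

instantiation fg :: group_add
begin
definition "0 = Abs_fg []"
definition "a + b = Abs_fg (fred (rep a @ rep b))"
definition "- a = Abs_fg (fred (finv (rep a)))"
definition "a - b = a + - (b::fg)"
instance
proof
  fix a b c :: fg
  show "a + b + c = a + (b + c)"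
    by (simp add: plus_fg_def)
  show "0 + a = a" by (simp add: plus_fg_def zero_fg_def fred_red rep_inverse)
  show "a + 0 = a" by (simp add: plus_fg_def zero_fg_def fred_red rep_inverse)
  show "- a + a = 0" by (simp add: plus_fg_def zero_fg_def uminus_fg_def fred_inv_cancel)
  show "a + - b = a - b" by (simp add: minus_fg_def)
qed
end

lemma rep_plus: "rep (a + b) = fred (rep a @ rep b)" by (simp add: plus_fg_def)
lemma rep_uminus: "rep (- a) = finv (rep a)" by (simp add: uminus_fg_def fred_red red_finv)
lemma rep_zero[simp]: "rep 0 = []" by (simp add: zero_fg_def)

definition gen :: "nat \<Rightarrow> fg" where "gen j = Abs_fg [(j, False)]"
lemma rep_gen[simp]: "rep (gen j) = [(j, False)]" by (simp add: gen_def)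

definition img :: "fg list \<Rightarrow> letter \<Rightarrow> fg" where
  "img y l = (if snd l then - (y ! (fst l - 1)) else y ! (fst l - 1))"

definition sub :: "fg list \<Rightarrow> letter list \<Rightarrow> fg" where
  "sub y w = sum_list (map (img y) w)"

lemma sub_Nil[simp]: "sub y [] = 0" by (simp add: sub_def)
lemma sub_Cons[simp]: "sub y (x # w) = img y x + sub y w" by (simp add: sub_def)
lemma sub_append[simp]: "sub y (a @ b) = sub y a + sub y b"
  by (induction a) (auto simp: add.assoc)

lemma sub_cancel: "sub y (cancel x r) = img y x + sub y r"
proof (cases r)
  case Nil then show ?thesis by simp
next
  case (Cons z r')
  show ?thesis
  proof (cases "cancels x z")
    case True
    then have "img y z = - img y x" by (auto simp: cancels_def img_def)
    then show ?thesis using True Cons by (simp add: cancel_simp add.assoc[symmetric])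
  next
    case False then show ?thesis using Cons by (simp add: cancel_simp)
  qed
qed

lemma sub_fred[simp]: "sub y (fred w) = sub y w"
  by (induction w) (auto simp: fred_Cons sub_cancel, simp add: fred_def)

lemma sum_list_rev_uminus: "sum_list (rev (map uminus xs)) = - sum_list (xs :: 'a::group_add list)"
  by (induction xs) (auto simp: minus_add)

lemma sub_finv[simp]: "sub y (finv w) = - sub y w"
proof -
  have *: "map (img y) (finv w) = rev (map uminus (map (img y) w))"
    by (simp add: finv_def rev_map img_def case_prod_beta)
  show ?thesis unfolding sub_def by (subst *) (rule sum_list_rev_uminus)
qed

definition S :: "fg list \<Rightarrow> fg \<Rightarrow> fg" where "S y g = sub y (rep g)"

lemma S_add[simp]: "S y (a + b) = S y a + S y b" by (simp add: S_def rep_plus)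
lemma S_uminus[simp]: "S y (- a) = - S y a" by (simp add: S_def rep_uminus)
lemma S_zero[simp]: "S y 0 = 0" by (simp add: S_def)
lemma S_diff[simp]: "S y (a - b) = S y a - S y b" by (simp only: diff_conv_add_uminus S_add S_uminus)
lemma S_gen[simp]: "S y (gen j) = y ! (j - 1)" by (simp add: S_def img_def)

lemma S_sum_list: "S z (sum_list xs) = sum_list (map (S z) xs)"
  by (induction xs) auto

lemma S_img: "1 \<le> fst l \<Longrightarrow> fst l \<le> length y \<Longrightarrow> S z (img y l) = img (map (S z) y) l"
  unfolding img_def by (cases "snd l") simp_all

lemma S_sub: "\<forall>l \<in> set w. 1 \<le> fst l \<and> fst l \<le> length y \<Longrightarrow> S z (sub y w) = sub (map (S z) y) w"
proof (induction w)
  case Nil then show ?case by simp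
next
  case (Cons l w)
  then show ?case by (simp add: S_img)
qed

definition lets :: "fg \<Rightarrow> nat set" where "lets g = fst ` set (rep g)"

lemma lets_add: "lets (a + b) \<subseteq> lets a \<union> lets b"
  using set_fred[of "rep a @ rep b"] by (auto simp: lets_def rep_plus)
lemma fst_finv: "fst ` set (finv w) = fst ` set w"
  by (simp add: finv_def image_image case_prod_beta)
lemma lets_uminus[simp]: "lets (- a) = lets a"
  by (simp add: lets_def rep_uminus fst_finv)
lemma lets_zero[simp]: "lets 0 = {}" by (simp add: lets_def)
lemma lets_gen[simp]: "lets (gen j) = {j}" by (simp add: lets_def)

lemma S_comp:
  assumes "lets g \<subseteq> {1..length y}"
  shows "S z (S y g) = S (map (S z) y) g"
proof -
  have "\<forall>l\<in>set (rep g). 1 \<le> fst l \<and> fst l \<le> length y"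
    using assms by (auto simp: lets_def)
  then show ?thesis using S_sub[of "rep g" y z] by (simp add: S_def[of y] S_def[of "map (S z) y"])
qed

lemma lets_sum_list: "lets (sum_list xs) \<subseteq> (\<Union>x\<in>set xs. lets x)"
proof (induction xs)
  case Nil then show ?case by simp
next
  case (Cons x xs)
  then show ?case using lets_add[of x "sum_list xs"] by auto
qed

lemma lets_S: "lets (S y g) \<subseteq> (\<Union>i\<in>lets g. lets (y ! (i - 1)))"
proof -
  have "lets (S y g) \<subseteq> (\<Union>x\<in>set (map (img y) (rep g)). lets x)"
    unfolding S_def sub_def by (rule lets_sum_list)
  also have "\<dots> \<subseteq> (\<Union>i\<in>lets g. lets (y ! (i - 1)))"
  proof (rule UN_least)
    fix x assume "x \<in> set (map (img y) (rep g))"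
    then obtain l where l: "l \<in> set (rep g)" "x = img y l" by auto
    have "lets x = lets (y ! (fst l - 1))" using l(2) by (cases "snd l") (simp_all add: img_def)
    moreover have "fst l \<in> lets g" using l(1) by (simp add: lets_def)
    ultimately show "lets x \<subseteq> (\<Union>i\<in>lets g. lets (y ! (i - 1)))" by blast
  qed
  finally show ?thesis .
qed

fun hl :: "letter \<Rightarrow> fg list \<Rightarrow> fg list" where
  "hl (i, False) x = x[i - 1 := x ! (i - 1) + x ! i + - (x ! (i - 1)), i := x ! (i - 1)]"
| "hl (i, True) x = x[i - 1 := x ! i, i := - (x ! i) + x ! (i - 1) + x ! i]"

definition H :: "letter list \<Rightarrow> fg list \<Rightarrow> fg list" where "H w x = foldr hl w x"

lemma H_Nil[simp]: "H [] x = x" by (simp add: H_def)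
lemma H_Cons[simp]: "H (s # w) x = hl s (H w x)" by (simp add: H_def)
lemma H_append: "H (a @ b) x = H a (H b x)" by (simp add: H_def)

lemma length_hl[simp]: "length (hl s x) = length x"
proof -
  obtain i e where "s = (i, e)" by (cases s)
  then show ?thesis by (cases e) simp_all
qed
lemma length_H[simp]: "length (H w x) = length x"
  by (induction w) auto

lemma rep_diff: "rep (a - b) = fred (rep a @ finv (rep b))"
  by (simp only: diff_conv_add_uminus rep_plus rep_uminus)

lemma map_rep_update: "map rep (x[p := v]) = (map rep x)[p := rep v]"
  by (simp add: map_update)

lemma hur_letter_rep:
  assumes "1 \<le> fst s" "fst s < length x"
  shows "hur_letter s (map rep x) = map rep (hl s x)"
proof -
  obtain i e where s: "s = (i, e)" by (cases s)
  have i1: "i - 1 < length x" "i < length x" using assms s by auto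
  show ?thesis
  proof (cases e)
    case False
    then show ?thesis using i1 s
      by (simp add: map_rep_update fmul_def rep_plus rep_uminus rep_diff)
  next
    case True
    then show ?thesis using i1 s
      by (simp add: map_rep_update fmul_def rep_plus rep_uminus rep_diff)
  qed
qed

lemma hurwitz_rep:
  "w \<in> braid_words (length x) \<Longrightarrow> hurwitz w (map rep x) = map rep (H w x)"
proof (induction w)
  case Nil then show ?case by simp
next
  case (Cons s w)
  then have "w \<in> braid_words (length x)" "1 \<le> fst s" "fst s < length x"
    by (auto simp: braid_words_def)
  then show ?case using Cons.IH by (simp add: hur_letter_rep)
qed

definition FB :: "nat \<Rightarrow> fg list" where "FB n = map gen [1..<n+1]"

lemma length_FB[simp]: "length (FB n) = n" by (simp add: FB_def)
lemma FB_nth[simp]: "j < n \<Longrightarrow> FB n ! j = gen (Suc j)" by (simp add: FB_def del: upt_Suc)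
lemma free_basis_FB: "free_basis n = map rep (FB n)"
  by (simp add: free_basis_def FB_def)

lemma map_S_FB: "length y = n \<Longrightarrow> map (S y) (FB n) = y"
  by (auto intro!: nth_equalityI)

lemma hl_map_S:
  assumes "1 \<le> fst s" "fst s < length x"
  shows "hl s (map (S y) x) = map (S y) (hl s x)"
proof -
  obtain i e where s: "s = (i, e)" by (cases s)
  have i1: "i - 1 < length x" "i < length x" using assms s by auto
  show ?thesis using i1 s by (cases e) (simp_all add: map_update)
qed

lemma H_map_S:
  "w \<in> braid_words (length x) \<Longrightarrow> H w (map (S y) x) = map (S y) (H w x)"
proof (induction w)
  case Nil then show ?case by simp
next
  case (Cons s w)
  then have "w \<in> braid_words (length x)" "1 \<le> fst s" "fst s < length x"
    by (auto simp: braid_words_def)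
  then show ?case using Cons.IH by (simp add: hl_map_S)
qed

lemma H_subst: "w \<in> braid_words n \<Longrightarrow> length y = n \<Longrightarrow> H w y = map (S y) (H w (FB n))"
  using H_map_S[of w "FB n" y] map_S_FB[of y n] by simp

lemmas gs = add.assoc diff_conv_add_uminus minus_add add_minus_cancel minus_add_cancel

definition vf :: "nat \<Rightarrow> letter list \<Rightarrow> letter list" where
  "vf n w = filter (\<lambda>l. 1 \<le> fst l \<and> fst l < n) w"

lemma vf_valid: "w \<in> braid_words n \<Longrightarrow> vf n w = w"
  by (auto simp: vf_def braid_words_def)

lemma hl_inv:
  assumes "1 \<le> i" "i < length x"
  shows "hl (i, e) (hl (i, \<not> e) x) = x"
  using assms
  by (cases e) (auto intro!: nth_equalityI simp: nth_list_update gs simp del: add_uminus_conv_diff)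

lemma hl_far:
  assumes "1 \<le> i" "i + 2 \<le> j" "j < length x"
  shows "hl (i, False) (hl (j, False) x) = hl (j, False) (hl (i, False) x)"
  using assms by (auto intro!: nth_equalityI simp: nth_list_update)

lemma hl_braid:
  assumes "1 \<le> i" "i + 1 < length x"
  shows "hl (i, False) (hl (i+1, False) (hl (i, False) x)) = hl (i+1, False) (hl (i, False) (hl (i+1, False) x))"
  using assms by (auto intro!: nth_equalityI simp: nth_list_update gs simp del: add_uminus_conv_diff)

lemma braid_eq_H_vf: "braid_eq n u v \<Longrightarrow> length x = n \<Longrightarrow> H (vf n u) x = H (vf n v) x"
proof (induction arbitrary: x rule: braid_eq.induct)
  case (refl w) then show ?case by simp
next
  case (sym u v) then show ?case by simp
next
  case (trans u v w) then show ?case by simp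
next
  case (ctxt u v a b)
  have "H (vf n u) (H (vf n b) x) = H (vf n v) (H (vf n b) x)" using ctxt by simp
  then show ?case unfolding vf_def filter_append H_append by simp
next
  case (cancel_rel i e)
  then show ?case using hl_inv[of i x e] by (simp add: vf_def)
next
  case (far_comm i j)
  then show ?case using hl_far[of i j x] by (simp add: vf_def)
next
  case (braid_rel i)
  then show ?case using hl_braid[of i x] by (simp add: vf_def)
qed

lemma braid_eq_H:
  "braid_eq n u v \<Longrightarrow> u \<in> braid_words n \<Longrightarrow> v \<in> braid_words n \<Longrightarrow> length x = n \<Longrightarrow> H u x = H v x"
  using braid_eq_H_vf[of n u v x] by (simp add: vf_valid)

definition dw :: "nat \<Rightarrow> nat \<Rightarrow> letter list" where
  "dw a b = map (\<lambda>i. (i, False)) (rev [a..<b])"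
definition dwi :: "nat \<Rightarrow> nat \<Rightarrow> letter list" where
  "dwi a b = map (\<lambda>i. (i, True)) [a..<b]"

lemma finv_dw: "finv (dw a b) = dwi a b"
  by (simp add: finv_def dw_def dwi_def rev_map)

lemma dw_same[simp]: "dw a a = []" by (simp add: dw_def)
lemma dwi_same[simp]: "dwi a a = []" by (simp add: dwi_def)

lemma dw_step: "p < n \<Longrightarrow> dw p n = dw (Suc p) n @ [(p, False)]"
  by (simp add: dw_def upt_conv_Cons)
lemma dwi_step: "p < n \<Longrightarrow> dwi p n = (p, True) # dwi (Suc p) n"
  by (simp add: dwi_def upt_conv_Cons)

lemma dw_valid: "1 \<le> p \<Longrightarrow> dw p n \<in> braid_words n"
  by (auto simp: dw_def braid_words_def)
lemma dwi_valid: "1 \<le> p \<Longrightarrow> dwi p n \<in> braid_words n"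
  by (auto simp: dwi_def braid_words_def)

lemma set_dw: "set (dw a b) = (\<lambda>i. (i, False)) ` {a..<b}"
  by (auto simp: dw_def)
lemma set_dwi: "set (dwi a b) = (\<lambda>i. (i, True)) ` {a..<b}"
  by (auto simp: dwi_def)

lemma E1: "1 \<le> p \<Longrightarrow> p \<le> n \<Longrightarrow> length y = n \<Longrightarrow> H (dw p n) y ! (n - 1) = y ! (p - 1)"
proof (induction "n - p" arbitrary: p y)
  case 0 then have "p = n" by simp
  then show ?case by simp
next
  case (Suc m)
  then have pn: "p < n" by simp
  have "H (dw p n) y = H (dw (Suc p) n) (hl (p, False) y)"
    using pn by (simp add: dw_step H_append)
  also have "\<dots> ! (n - 1) = hl (p, False) y ! (Suc p - 1)"
    using Suc by (intro Suc.hyps) auto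
  also have "\<dots> = y ! (p - 1)" using Suc.prems pn by (simp add: nth_list_update)
  finally show ?case .
qed

lemma E2: "1 \<le> p \<Longrightarrow> p \<le> n \<Longrightarrow> length y = n \<Longrightarrow>
  H (dwi p n) y ! (p - 1) = y ! (n - 1) \<and> (\<forall>i < p - 1. H (dwi p n) y ! i = y ! i)"
proof (induction "n - p" arbitrary: p y)
  case 0 then have "p = n" by simp
  then show ?case by simp
next
  case (Suc m)
  then have pn: "p < n" by simp
  let ?z = "H (dwi (Suc p) n) y"
  have IH: "?z ! (Suc p - 1) = y ! (n - 1) \<and> (\<forall>i < Suc p - 1. ?z ! i = y ! i)"
    using Suc by (intro Suc.hyps) auto
  have lz: "length ?z = n" using Suc.prems by simp
  have eq: "H (dwi p n) y = hl (p, True) ?z" using pn by (simp add: dwi_step)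
  show ?case unfolding eq using IH lz pn Suc.prems by (auto simp: nth_list_update)
qed

lemma Z1: "length A = p - 1 \<Longrightarrow> 1 \<le> p \<Longrightarrow> length (A @ B @ [0]) = n \<Longrightarrow>
  H (dwi p n) (A @ B @ [0]) = A @ [0] @ B"
proof (induction B arbitrary: A p)
  case Nil then have "p = n" by simp
  then show ?case by simp
next
  case (Cons b B)
  then have pn: "p < n" by simp
  have "H (dwi (Suc p) n) ((A @ [b]) @ B @ [0]) = (A @ [b]) @ [0] @ B"
    using Cons by (intro Cons.IH) auto
  then have "H (dwi p n) (A @ (b # B) @ [0]) = hl (p, True) (A @ [b, 0] @ B)"
    using pn by (simp add: dwi_step)
  also have "\<dots> = A @ [0, b] @ B"
    using Cons.prems by (auto intro!: nth_equalityI simp: nth_list_update nth_append)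
  finally show ?case by simp
qed

lemma Z2: "length A = p - 1 \<Longrightarrow> 1 \<le> p \<Longrightarrow> length (A @ [0] @ B) = n \<Longrightarrow>
  H (dw p n) (A @ [0] @ B) = A @ B @ [0]"
proof (induction B arbitrary: A p)
  case Nil then have "p = n" by simp
  then show ?case by simp
next
  case (Cons b B)
  then have pn: "p < n" by simp
  have h: "hl (p, False) (A @ [0] @ b # B) = (A @ [b]) @ [0] @ B"
    using Cons.prems by (auto intro!: nth_equalityI simp: nth_list_update nth_append)
  have "H (dw p n) (A @ [0] @ b # B) = H (dw (Suc p) n) ((A @ [b]) @ [0] @ B)"
    using pn h by (simp add: dw_step H_append)
  also have "\<dots> = (A @ [b]) @ B @ [0]"
    using Cons by (intro Cons.IH) auto
  finally show ?case by simp
qed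

lemma Z3: "length A = j - 1 \<Longrightarrow> 1 \<le> j \<Longrightarrow> hl (j, d) (hl (j, d) (A @ [a, 0] @ B)) = A @ [a, 0] @ B"
  by (cases d) (auto intro!: nth_equalityI simp: nth_list_update nth_append gs simp del: add_uminus_conv_diff)

definition tau :: "nat \<Rightarrow> nat \<Rightarrow> bool \<Rightarrow> letter list" where
  "tau n j d = dw (Suc j) n @ [(j, d), (j, d)] @ dwi (Suc j) n"

lemma tau_valid: "1 \<le> j \<Longrightarrow> j < n \<Longrightarrow> tau n j d \<in> braid_words n"
  by (auto simp: tau_def braid_words_def set_dw set_dwi)

lemma T2:
  assumes "1 \<le> j" "j < n" "length y = n" "y ! (n - 1) = 0"
  shows "H (tau n j d) y = y"
proof -
  obtain A a B where y: "y = A @ [a] @ B @ [0]" and lA: "length A = j - 1"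
  proof -
    have y1: "y = take (n - 1) y @ [y ! (n - 1)]"
      using take_Suc_conv_app_nth[of "n - 1" y] assms by simp
    have y2: "take (n - 1) y = take (j - 1) (take (n - 1) y) @ take (n - 1) y ! (j - 1) # drop (Suc (j - 1)) (take (n - 1) y)"
      by (rule id_take_nth_drop) (use assms in simp)
    assume r: "\<And>A a B. y = A @ [a] @ B @ [0] \<Longrightarrow> length A = j - 1 \<Longrightarrow> thesis"
    show thesis
    proof (rule r)
      show "y = take (j - 1) (take (n - 1) y) @ [take (n - 1) y ! (j - 1)] @ drop (Suc (j - 1)) (take (n - 1) y) @ [0]"
        using y1 y2 assms(4) by (metis append.assoc append_Cons append_Nil)
    qed (use assms in simp)
  qed
  have "H (dwi (Suc j) n) y = (A @ [a]) @ [0] @ B"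
    using Z1[of "A @ [a]" "Suc j" B n] y lA assms by simp
  then have "H (tau n j d) y = H (dw (Suc j) n) (hl (j, d) (hl (j, d) (A @ [a, 0] @ B)))"
    by (simp add: tau_def H_append)
  also have "\<dots> = H (dw (Suc j) n) ((A @ [a]) @ [0] @ B)" using Z3[OF lA assms(1)] by simp
  also have "\<dots> = (A @ [a]) @ B @ [0]" using lA assms y by (intro Z2) auto
  finally show ?thesis using y by simp
qed

lemma T1:
  assumes "1 \<le> j" "j < n"
  shows "H (tau n j d) (FB n) ! (n - 1) =
     (if d then (- gen n - gen j) + gen n - (- gen n - gen j) else gen j + gen n - gen j)"
proof -
  let ?z = "H (dwi (Suc j) n) (FB n)"
  have z: "?z ! j = gen n" "?z ! (j - 1) = gen j"
    using E2[of "Suc j" n "FB n"] assms by auto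
  have lz: "length ?z = n" by simp
  let ?u = "hl (j, d) (hl (j, d) ?z)"
  have "H (tau n j d) (FB n) = H (dw (Suc j) n) ?u" by (simp add: tau_def H_append)
  also have "\<dots> ! (n - 1) = ?u ! (Suc j - 1)" using assms by (intro E1) auto
  also have "\<dots> = (if d then (- gen n - gen j) + gen n - (- gen n - gen j) else gen j + gen n - gen j)"
    using z lz assms
    by (cases d) (auto simp: nth_list_update gs simp del: add_uminus_conv_diff)
  finally show ?thesis .
qed

lemma lets_diff: "lets (a - b) \<subseteq> lets a \<union> lets b"
  using lets_add[of a "- b"] by (simp only: diff_conv_add_uminus lets_uminus)

lemma lets_conj: "lets (a + b - a) \<subseteq> lets a \<union> lets b"
  using lets_diff[of "a + b" a] lets_add[of a b] by blast

lemma lets_conj': "lets (- b + a + b) \<subseteq> lets a \<union> lets b"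
  using lets_add[of "- b + a" b] lets_add[of "- b" a] by auto

definition ent :: "nat set \<Rightarrow> fg list \<Rightarrow> bool" where
  "ent L x \<longleftrightarrow> (\<forall>g\<in>set x. lets g \<subseteq> L)"

lemma ent_nth: "ent L x \<Longrightarrow> i < length x \<Longrightarrow> lets (x ! i) \<subseteq> L"
  by (auto simp: ent_def)

lemma ent_update: "ent L x \<Longrightarrow> lets v \<subseteq> L \<Longrightarrow> ent L (x[i := v])"
  unfolding ent_def using set_update_subset_insert[of x i v] by blast

lemma ent_hl: "ent L x \<Longrightarrow> 1 \<le> fst s \<Longrightarrow> fst s < length x \<Longrightarrow> ent L (hl s x)"
proof -
  assume a: "ent L x" "1 \<le> fst s" "fst s < length x"
  obtain i e where s: "s = (i, e)" by (cases s)
  have l: "lets (x ! (i - 1)) \<subseteq> L" "lets (x ! i) \<subseteq> L"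
    using ent_nth[OF a(1), of "i - 1"] ent_nth[OF a(1), of i] a s by auto
  show ?thesis
  proof (cases e)
    case False
    then show ?thesis using s a l lets_conj[of "x ! (i - 1)" "x ! i"]
      by (auto intro!: ent_update)
  next
    case True
    then show ?thesis using s a l lets_conj'[where a="x ! (i - 1)" and b="x ! i"]
      by (auto intro!: ent_update)
  qed
qed

lemma ent_H: "ent L x \<Longrightarrow> w \<in> braid_words (length x) \<Longrightarrow> ent L (H w x)"
  by (induction w) (auto simp: braid_words_def intro!: ent_hl)

lemma ent_FB: "ent {1..n} (FB n)"
  by (auto simp: ent_def FB_def)

lemma ent_H_FB: "w \<in> braid_words n \<Longrightarrow> i < n \<Longrightarrow> lets (H w (FB n) ! i) \<subseteq> {1..n}"
  by (rule ent_nth[OF ent_H[OF ent_FB]]) simp_all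

definition bs :: "nat \<Rightarrow> nat \<Rightarrow> nat \<Rightarrow> nat set" where
  "bs n k j = (if j < k then {1..k} else {k+1..n})"

definition blk :: "nat \<Rightarrow> nat \<Rightarrow> fg list \<Rightarrow> bool" where
  "blk n k x \<longleftrightarrow> (\<forall>j < n. lets (x ! j) \<subseteq> bs n k j)"

lemma blk_update:
  assumes "blk n k x" "length x = n" "lets v \<subseteq> bs n k p"
  shows "blk n k (x[p := v])"
  unfolding blk_def
proof (intro allI impI)
  fix j assume "j < n"
  then show "lets (x[p := v] ! j) \<subseteq> bs n k j"
    using assms by (cases "j = p") (auto simp: blk_def)
qed

lemma blk_hl:
  assumes "blk n k x" "length x = n" "1 \<le> i" "i < n" "i \<noteq> k"
  shows "blk n k (hl (i, e) x)"
proof -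
  have same: "bs n k (i - 1) = bs n k i" using assms by (auto simp: bs_def)
  have l1: "lets (x ! (i - 1)) \<subseteq> bs n k i" using assms same unfolding blk_def
    by (metis less_imp_diff_less)
  have l2: "lets (x ! i) \<subseteq> bs n k i" using assms unfolding blk_def by metis
  show ?thesis
  proof (cases e)
    case False
    have v0: "lets (x ! (i - 1) + x ! i - x ! (i - 1)) \<subseteq> bs n k i"
      using lets_conj[of "x ! (i - 1)" "x ! i"] l1 l2 by blast
    have v: "lets (x ! (i - 1) + x ! i - x ! (i - 1)) \<subseteq> bs n k (i - 1)"
      using v0 same by simp
    show ?thesis using False blk_update[OF blk_update[OF assms(1) assms(2) v], of "x ! (i - 1)" i] l1 assms(2) by simp
  next
    case True
    have v: "lets (- x ! i + x ! (i - 1) + x ! i) \<subseteq> bs n k i"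
      using lets_conj'[where a="x ! (i - 1)" and b="x ! i"] l1 l2 by auto
    have v2: "lets (x ! i) \<subseteq> bs n k (i - 1)" using l2 same by simp
    show ?thesis using True blk_update[OF blk_update[OF assms(1) assms(2) v2] _ v] assms(2) by simp
  qed
qed

lemma blk_H: "blk n k x \<Longrightarrow> length x = n \<Longrightarrow> w \<in> braid_words n \<Longrightarrow> \<forall>l\<in>set w. fst l \<noteq> k \<Longrightarrow> blk n k (H w x)"
proof (induction w)
  case Nil then show ?case by simp
next
  case (Cons s w)
  obtain i e where s: "s = (i, e)" by (cases s)
  have "blk n k (H w x)" using Cons by (auto simp: braid_words_def)
  then show ?case using Cons.prems s by (auto simp: braid_words_def intro!: blk_hl)
qed

lemma blk_FB: "k \<le> n \<Longrightarrow> blk n k (FB n)"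
  by (auto simp: blk_def bs_def)

lemma lets_S_blk:
  assumes "blk n k y" "length y = n" "lets g \<subseteq> bs n k j" "j < n" "k \<le> n"
  shows "lets (S y g) \<subseteq> bs n k j"
proof -
  have "lets (y ! (i - 1)) \<subseteq> bs n k j" if "i \<in> lets g" for i
  proof -
    have i: "i \<in> bs n k j" using that assms by auto
    then have "i - 1 < n" "bs n k (i - 1) = bs n k j" using assms(4,5) by (auto simp: bs_def split: if_splits)
    then show ?thesis using assms(1) unfolding blk_def by metis
  qed
  then show ?thesis using lets_S[of y g] by blast
qed

lemma blk_map_S:
  assumes "blk n k y" "length y = n" "blk n k x" "length x = n" "k \<le> n"
  shows "blk n k (map (S y) x)"
  unfolding blk_def
proof (intro allI impI)
  fix j assume j: "j < n"
  have "lets (x ! j) \<subseteq> bs n k j" using assms(3) j by (simp add: blk_def)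
  then have "lets (S y (x ! j)) \<subseteq> bs n k j" using assms j by (intro lets_S_blk) auto
  then show "lets (map (S y) x ! j) \<subseteq> bs n k j" using j assms(4) by simp
qed

definition esl :: "nat \<Rightarrow> letter list \<Rightarrow> int" where
  "esl q w = sum_list (map (\<lambda>l. if fst l = q then (if snd l then -1 else 1) else 0) w)"

lemma esl_Nil[simp]: "esl q [] = 0" by (simp add: esl_def)
lemma esl_Cons: "esl q (x # w) = esl q [x] + esl q w" by (simp add: esl_def)
lemma esl_append: "esl q (a @ b) = esl q a + esl q b" by (simp add: esl_def)

lemma esl_cancel: "esl q (cancel x r) = esl q [x] + esl q r"
proof (cases r)
  case Nil then show ?thesis by simp
next
  case (Cons z r')
  then show ?thesis
    by (cases "cancels x z") (auto simp: cancel_simp esl_def cancels_def)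
qed

lemma esl_fred: "esl q (fred w) = esl q w"
proof (induction w)
  case Nil then show ?case by (simp add: fred_def)
next
  case (Cons x w) then show ?case by (simp add: fred_Cons esl_cancel esl_Cons[of q x w])
qed

lemma esl_finv: "esl q (finv w) = - esl q w"
  by (induction w) (auto simp: finv_Cons esl_append esl_Cons[of q _ "_"] esl_def)

definition es :: "nat \<Rightarrow> fg \<Rightarrow> int" where "es q g = esl q (rep g)"

lemma es_add: "es q (a + b) = es q a + es q b"
  by (simp add: es_def rep_plus esl_fred esl_append)
lemma es_uminus: "es q (- a) = - es q a"
  by (simp add: es_def rep_uminus esl_finv)
lemma es_diff: "es q (a - b) = es q a - es q b"
  by (simp only: diff_conv_add_uminus es_add es_uminus)
lemma es_gen: "es q (gen q) = 1" by (simp add: es_def esl_def)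

lemma esl_zero: "\<forall>l\<in>set w. fst l \<noteq> q \<Longrightarrow> esl q w = 0"
  by (induction w) (auto simp: esl_def)

lemma es_zero_if: "q \<notin> lets g \<Longrightarrow> es q g = 0"
  unfolding es_def by (rule esl_zero) (auto simp: lets_def)

lemma conj_lets: "lets (w + gen q - w) \<subseteq> L \<Longrightarrow> q \<in> L"
proof (rule ccontr)
  assume a: "lets (w + gen q - w) \<subseteq> L" "q \<notin> L"
  have "es q (w + gen q - w) = 1" by (simp add: es_diff es_add es_gen)
  moreover have "es q (w + gen q - w) = 0" using a by (intro es_zero_if) auto
  ultimately show False by simp
qed

definition fbz :: "nat \<Rightarrow> fg list" where "fbz n = (FB n)[n - 1 := 0]"

lemma length_fbz[simp]: "length (fbz n) = n" by (simp add: fbz_def)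
lemma fbz_nth: "i < n \<Longrightarrow> fbz n ! i = (if i = n - 1 then 0 else gen (Suc i))"
  by (simp add: fbz_def nth_list_update)

lemma rep_img_FB: "1 \<le> fst x \<Longrightarrow> fst x \<le> n \<Longrightarrow> rep (img (FB n) x) = [x]"
  by (cases x) (auto simp: img_def rep_uminus finv_def)

lemma sub_FB_rep: "\<forall>l\<in>set u. 1 \<le> fst l \<and> fst l \<le> n \<Longrightarrow> rep (sub (FB n) u) = fred u"
proof (induction u)
  case Nil then show ?case by (simp add: fred_def)
next
  case (Cons x u)
  then have "rep (sub (FB n) (x # u)) = fred ([x] @ fred u)"
    by (simp add: rep_plus rep_img_FB)
  then show ?case by (simp add: fred_Cons)
qed

lemma comm_gen:
  "red T \<Longrightarrow> \<forall>l\<in>set T. fst l = n \<Longrightarrow> Abs_fg T + gen n = gen n + Abs_fg T"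
proof (induction T)
  case Nil then show ?case by (simp add: zero_fg_def[symmetric])
next
  case (Cons x T)
  have rT: "red T" using Cons.prems red_tl by blast
  have IH: "Abs_fg T + gen n = gen n + Abs_fg T" using Cons rT by simp
  have sp: "Abs_fg (x # T) = Abs_fg [x] + Abs_fg T"
  proof -
    have "rep (Abs_fg [x] + Abs_fg T) = fred (x # T)" using rT by (simp add: rep_plus)
    also have "\<dots> = x # T" using Cons.prems by (simp add: fred_red)
    finally show ?thesis by (metis Abs_fg_inverse' Cons.prems(1) rep_inverse)
  qed
  have cx: "Abs_fg [x] + gen n = gen n + Abs_fg [x]"
  proof (cases "snd x")
    case True
    then have "Abs_fg [x] = - gen n" using Cons.prems
      by (cases x) (auto intro!: rep_inject[THEN iffD1] simp: rep_uminus finv_def)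
    then show ?thesis by simp
  next
    case False
    then have "Abs_fg [x] = gen n" using Cons.prems by (cases x) (simp add: gen_def)
    then show ?thesis by simp
  qed
  have "Abs_fg (x # T) + gen n = Abs_fg [x] + (Abs_fg T + gen n)" by (simp add: sp add.assoc)
  also have "\<dots> = (Abs_fg [x] + gen n) + Abs_fg T" by (simp add: IH add.assoc)
  also have "\<dots> = gen n + Abs_fg (x # T)" by (simp add: cx sp add.assoc)
  finally show ?case .
qed

lemma sub_fbz_n: "1 \<le> n \<Longrightarrow> \<forall>l\<in>set T. fst l = n \<Longrightarrow> sub (fbz n) T = 0"
  by (induction T) (auto simp: img_def fbz_nth)

lemma strip:
  assumes W: "lets W \<subseteq> {1..n}" and L: "lets (W + gen n - W) \<subseteq> L" and n: "1 \<le> n"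
  shows "lets (S (fbz n) W) \<subseteq> L"
proof -
  define P where "P = (\<lambda>l::letter. fst l = n)"
  define R where "R = rep W"
  define T where "T = rev (takeWhile P (rev R))"
  define R' where "R' = rev (dropWhile P (rev R))"
  have "R' @ T = rev (takeWhile P (rev R) @ dropWhile P (rev R))" unfolding T_def R'_def
    by (simp only: rev_append)
  then have hR: "R = R' @ T" by simp
  have rR: "red R" by (simp add: R_def)
  then have "red R' \<and> red T" unfolding hR red_append by blast
  then have rR': "red R'" and rT: "red T" by auto
  have lastR': "R' \<noteq> [] \<Longrightarrow> fst (last R') \<noteq> n"
  proof -
    assume "R' \<noteq> []"
    then have "dropWhile P (rev R) \<noteq> []" by (simp add: R'_def)
    then have "\<not> P (hd (dropWhile P (rev R)))" by (rule hd_dropWhile)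
    then show ?thesis by (simp add: R'_def P_def last_rev)
  qed
  have allT: "\<forall>l\<in>set T. fst l = n" unfolding T_def P_def by (auto dest: set_takeWhileD)
  have Wsplit: "W = Abs_fg R' + Abs_fg T"
  proof -
    have "rep (Abs_fg R' + Abs_fg T) = fred (R' @ T)" using rR' rT by (simp add: rep_plus)
    also have "\<dots> = rep W" using hR rR by (simp add: fred_red R_def)
    finally show ?thesis using rep_inject[of "Abs_fg R' + Abs_fg T" W] by simp
  qed
  have cT: "Abs_fg T + gen n = gen n + Abs_fg T" using comm_gen[OF rT allT] .
  have conj: "W + gen n - W = Abs_fg R' + gen n - Abs_fg R'"
  proof -
    have "W + gen n - W = Abs_fg R' + ((Abs_fg T + gen n) + (- Abs_fg T + - Abs_fg R'))"
      by (simp add: Wsplit gs del: add_uminus_conv_diff)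
    also have "\<dots> = Abs_fg R' + gen n - Abs_fg R'"
      by (simp add: cT gs del: add_uminus_conv_diff)
    finally show ?thesis .
  qed
  have red1: "red (R' @ [(n, False)])" using rR' lastR'
    by (cases "R' = []") (auto simp: red_append cancels_def)
  have hdinv: "R' \<noteq> [] \<Longrightarrow> hd (finv R') = (fst (last R'), \<not> snd (last R'))"
    by (simp add: finv_def hd_rev last_map case_prod_beta)
  have fnil: "finv R' = [] \<longleftrightarrow> R' = []" by (simp add: finv_def)
  have red2: "red ((R' @ [(n, False)]) @ finv R')"
  proof (cases "R' = []")
    case True then show ?thesis using red1 by simp
  next
    case False
    have "\<not> cancels (last (R' @ [(n, False)])) (hd (finv R'))"
      using hdinv[OF False] lastR'[OF False] by (simp add: cancels_def)
    then show ?thesis using red1 red_finv[OF rR'] by (simp only: red_append) simp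
  qed
  have "rep (Abs_fg R' + gen n - Abs_fg R') = (R' @ [(n, False)]) @ finv R'"
    using rR' red1 red2 by (simp add: rep_diff rep_plus fred_red)
  then have "fst ` set R' \<subseteq> lets (W + gen n - W)" unfolding conj lets_def by auto
  then have R'L: "fst ` set R' \<subseteq> L" using L by blast
  have R'n: "fst ` set R' \<subseteq> {1..n}" using W hR unfolding lets_def R_def by auto
  have "S (fbz n) W = S (fbz n) (Abs_fg R') + S (fbz n) (Abs_fg T)" by (simp add: Wsplit)
  also have "S (fbz n) (Abs_fg T) = 0" using rT allT n by (simp add: S_def sub_fbz_n)
  finally have eq: "S (fbz n) W = S (fbz n) (Abs_fg R')" by simp
  have "lets (S (fbz n) (Abs_fg R')) \<subseteq> (\<Union>i\<in>lets (Abs_fg R'). lets (fbz n ! (i - 1)))"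
    by (rule lets_S)
  also have "\<dots> \<subseteq> L"
  proof (rule UN_least)
    fix i assume "i \<in> lets (Abs_fg R')"
    then have i: "i \<in> fst ` set R'" using rR' by (simp add: lets_def)
    then have "i \<in> {1..n}" using R'n by blast
    then have "i - 1 < n" "1 \<le> i" by auto
    then have "lets (fbz n ! (i - 1)) \<subseteq> {i}" by (auto simp: fbz_nth)
    then show "lets (fbz n ! (i - 1)) \<subseteq> L" using i R'L by blast
  qed
  finally show ?thesis using eq by simp
qed

definition texp :: "nat \<Rightarrow> letter list \<Rightarrow> letter list" where
  "texp n u = concat (map (\<lambda>l. tau n (fst l) (snd l)) u)"

lemma texp_Nil[simp]: "texp n [] = []" by (simp add: texp_def)
lemma texp_Cons: "texp n (l # u) = tau n (fst l) (snd l) @ texp n u" by (simp add: texp_def)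
lemma texp_append: "texp n (a @ b) = texp n a @ texp n b" by (simp add: texp_def)

lemma texp_valid: "\<forall>l\<in>set u. 1 \<le> fst l \<and> fst l < n \<Longrightarrow> texp n u \<in> braid_words n"
proof (induction u)
  case Nil then show ?case by (simp add: braid_words_def)
next
  case (Cons l u)
  then have "tau n (fst l) (snd l) \<in> braid_words n" by (intro tau_valid) auto
  then show ?case using Cons by (auto simp: texp_Cons braid_words_def)
qed

lemma tau_inv:
  assumes n: "1 \<le> n" and u: "\<forall>l\<in>set u. 1 \<le> fst l \<and> fst l < n"
  shows "map (S (fbz n)) (H (texp n u) (FB n)) = fbz n \<and>
    (\<exists>W. lets W \<subseteq> {1..n} \<and> H (texp n u) (FB n) ! (n - 1) = W + gen n - W \<and>
         S (fbz n) W = sub (FB n) u)"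
  using u
proof (induction u)
  case Nil
  have "map (S (fbz n)) (FB n) = fbz n" by (rule map_S_FB) simp
  moreover have "FB n ! (n - 1) = 0 + gen n - 0" using n by simp
  ultimately show ?case by (intro conjI exI[of _ 0]) auto
next
  case (Cons l u)
  obtain j d where l: "l = (j, d)" by (cases l)
  have j: "1 \<le> j" "j < n" using Cons.prems l by auto
  have uv: "\<forall>l\<in>set u. 1 \<le> fst l \<and> fst l < n" using Cons.prems by auto
  from Cons.IH[OF uv] obtain W0 where
    I1: "map (S (fbz n)) (H (texp n u) (FB n)) = fbz n" and
    W0: "lets W0 \<subseteq> {1..n}" "H (texp n u) (FB n) ! (n - 1) = W0 + gen n - W0"
        "S (fbz n) W0 = sub (FB n) u" by blast
  define x0 where "x0 = H (texp n u) (FB n)"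
  define z where "z = H (tau n j d) (FB n)"
  have lx0: "length x0 = n" by (simp add: x0_def)
  have tv: "tau n j d \<in> braid_words n" using j by (rule tau_valid)
  have xv: "texp n u \<in> braid_words n" using uv by (rule texp_valid)
  have ex0: "lets (x0 ! i) \<subseteq> {1..n}" if "i < n" for i
    using ent_H_FB[OF xv that] by (simp add: x0_def)
  have ez: "lets (z ! i) \<subseteq> {1..n}" if "i < n" for i
    using ent_H_FB[OF tv that] by (simp add: z_def)
  have eq: "H (texp n (l # u)) (FB n) = map (S x0) z"
    using H_subst[OF tv lx0] by (simp add: l texp_Cons H_append x0_def z_def)
  have p1: "map (S (fbz n)) (map (S x0) z) = fbz n"
  proof -
    have lz: "length z = n" by (simp add: z_def)
    have "map (S (fbz n)) (map (S x0) z) = map (S (map (S (fbz n)) x0)) z"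
    proof (rule nth_equalityI)
      show "length (map (S (fbz n)) (map (S x0) z)) = length (map (S (map (S (fbz n)) x0)) z)" by simp
      fix i assume "i < length (map (S (fbz n)) (map (S x0) z))"
      then have i: "i < n" using lz by simp
      have "lets (z ! i) \<subseteq> {1..length x0}" using ez[OF i] lx0 by simp
      then show "map (S (fbz n)) (map (S x0) z) ! i = map (S (map (S (fbz n)) x0)) z ! i"
        using i lz by (simp add: S_comp)
    qed
    also have "\<dots> = map (S (fbz n)) z" using I1 by (simp add: x0_def)
    also have "\<dots> = H (tau n j d) (fbz n)" using H_subst[OF tv, of "fbz n"] by (simp add: z_def)
    also have "\<dots> = fbz n" using j n by (intro T2) (auto simp: fbz_def)
    finally show ?thesis .
  qed
  define w where "w = (if d then - gen n - gen j else gen j)"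
  have zn: "z ! (n - 1) = w + gen n - w" using T1[OF j, of d] by (cases d) (simp_all add: z_def w_def)
  have lw: "lets w \<subseteq> {1..n}" using j lets_diff[of "- gen n" "gen j"] by (auto simp: w_def)
  define W where "W = S x0 w + W0"
  have "map (S x0) z ! (n - 1) = S x0 w + x0 ! (n - 1) - S x0 w" using zn n by (simp add: z_def)
  also have "\<dots> = W + gen n - W" using W0(2) by (simp add: W_def x0_def gs del: add_uminus_conv_diff)
  finally have p2: "map (S x0) z ! (n - 1) = W + gen n - W" .
  have lW: "lets W \<subseteq> {1..n}"
  proof -
    have "lets (S x0 w) \<subseteq> {1..n}"
    proof -
      have "lets (S x0 w) \<subseteq> (\<Union>i\<in>lets w. lets (x0 ! (i - 1)))" by (rule lets_S)
      also have "\<dots> \<subseteq> {1..n}"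
      proof (rule UN_least)
        fix i assume "i \<in> lets w"
        then have "i \<in> {1..n}" using lw by blast
        then have "i - 1 < n" by auto
        then show "lets (x0 ! (i - 1)) \<subseteq> {1..n}" by (rule ex0)
      qed
      finally show ?thesis .
    qed
    then show ?thesis using W0(1) lets_add[of "S x0 w" W0] by (auto simp: W_def)
  qed
  have "S (fbz n) W = S (map (S (fbz n)) x0) w + S (fbz n) W0"
    using lw lx0 by (simp add: W_def S_comp)
  also have "\<dots> = S (fbz n) w + sub (FB n) u" using I1 W0(3) by (simp add: x0_def)
  also have "S (fbz n) w = img (FB n) l"
    using j by (cases d) (auto simp: w_def fbz_nth img_def l)
  finally have p3: "S (fbz n) W = sub (FB n) (l # u)" by simp
  show ?case using p1 p2 p3 lW eq by auto
qed

lemma be_refl[simp]: "braid_eq n w w" by (rule braid_eq.refl)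
lemma be_sym: "braid_eq n u v \<Longrightarrow> braid_eq n v u" by (rule braid_eq.sym)
lemma be_trans[trans]: "braid_eq n u v \<Longrightarrow> braid_eq n v w \<Longrightarrow> braid_eq n u w"
  by (rule braid_eq.trans)

lemma be_sub: "braid_eq n u v \<Longrightarrow> x = a @ u @ b \<Longrightarrow> y = a @ v @ b \<Longrightarrow> braid_eq n x y"
  using braid_eq.ctxt by blast

lemma be_app: "braid_eq n u u' \<Longrightarrow> braid_eq n v v' \<Longrightarrow> braid_eq n (u @ v) (u' @ v')"
proof -
  assume a: "braid_eq n u u'" "braid_eq n v v'"
  have "braid_eq n (u @ v) (u' @ v)" by (rule be_sub[OF a(1), of _ "[]" v]) simp_all
  also have "braid_eq n (u' @ v) (u' @ v')" by (rule be_sub[OF a(2), of _ u' "[]"]) simp_all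
  finally show ?thesis .
qed

lemma bw_append[simp]: "a @ b \<in> braid_words n \<longleftrightarrow> a \<in> braid_words n \<and> b \<in> braid_words n"
  by (auto simp: braid_words_def)
lemma bw_Cons[simp]: "x # b \<in> braid_words n \<longleftrightarrow> 1 \<le> fst x \<and> fst x < n \<and> b \<in> braid_words n"
  by (auto simp: braid_words_def)
lemma bw_Nil[simp]: "[] \<in> braid_words n" by (simp add: braid_words_def)
lemma bw_finv[simp]: "finv w \<in> braid_words n \<longleftrightarrow> w \<in> braid_words n"
  by (auto simp: braid_words_def finv_def)

lemma be_pair: "1 \<le> i \<Longrightarrow> i < n \<Longrightarrow> braid_eq n [(i, e), (i, \<not> e)] []"
  by (rule braid_eq.cancel_rel)

lemma be_inv_r: "w \<in> braid_words n \<Longrightarrow> braid_eq n (w @ finv w) []"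
proof (induction w)
  case Nil then show ?case by simp
next
  case (Cons x w)
  obtain i e where x: "x = (i, e)" by (cases x)
  have v: "1 \<le> i" "i < n" "w \<in> braid_words n" using Cons.prems x by auto
  have "braid_eq n ((x # w) @ finv (x # w)) ([x] @ [] @ [(i, \<not> e)])"
    by (rule be_sub[OF Cons.IH[OF v(3)], of _ "[x]" "[(i, \<not> e)]"]) (simp_all add: finv_Cons x)
  also have "braid_eq n ([x] @ [] @ [(i, \<not> e)]) []" using be_pair[OF v(1,2), of e] x by simp
  finally show ?case .
qed

lemma be_inv_l: "w \<in> braid_words n \<Longrightarrow> braid_eq n (finv w @ w) []"
  using be_inv_r[of "finv w" n] by simp

lemma be_step: "braid_eq n u v \<Longrightarrow> x = a @ u @ b \<Longrightarrow> braid_eq n (a @ v @ b) y \<Longrightarrow> braid_eq n x y"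
  using braid_eq.ctxt braid_eq.trans by blast

lemma be_fin: "x = y \<Longrightarrow> braid_eq n x y" by simp

lemma be_del: "braid_eq n u [] \<Longrightarrow> braid_eq n (a @ u @ b) (a @ b)"
  using be_sub[of n u "[]" _ a b] by simp
lemma be_ins: "braid_eq n u [] \<Longrightarrow> braid_eq n (a @ b) (a @ u @ b)"
  using be_sym[OF be_del] by blast

lemma be_finv:
  assumes "braid_eq n u v" "u \<in> braid_words n" "v \<in> braid_words n"
  shows "braid_eq n (finv u) (finv v)"
  apply (rule be_step[OF be_sym[OF be_inv_r[OF assms(3)]], where a="finv u" and b="[]"])
   apply simp
  apply (rule be_step[OF be_sym[OF assms(1)], where a="finv u" and b="finv v"])
   apply simp
  apply (rule be_step[OF be_inv_l[OF assms(2)], where a="[]" and b="finv v"])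
   apply simp
  apply simp
  done

lemma finv_single: "finv [(i, e)] = [(i, \<not> e)]" by (simp add: finv_def)

lemma conj_inv:
  assumes "braid_eq n (X @ [(i, e)]) ([(i, e)] @ Y)" "X \<in> braid_words n" "Y \<in> braid_words n" "1 \<le> i" "i < n"
  shows "braid_eq n (finv X @ [(i, e)]) ([(i, e)] @ finv Y)"
proof -
  have a: "braid_eq n ([(i, \<not> e)] @ finv X) (finv Y @ [(i, \<not> e)])"
    using be_finv[OF assms(1)] assms by (simp add: finv_append finv_Cons)
  have p1: "braid_eq n [(i, e), (i, \<not> e)] []" using assms by (intro be_pair)
  have p2: "braid_eq n [(i, \<not> e), (i, e)] []" using be_pair[OF assms(4,5), of "\<not> e"] by simp
  show ?thesis
    apply (rule be_step[OF be_sym[OF p1], where a="[]" and b="finv X @ [(i, e)]"])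
     apply simp
    apply (rule be_step[OF a, where a="[(i, e)]" and b="[(i, e)]"])
     apply simp
    apply (rule be_step[OF p2, where a="[(i, e)] @ finv Y" and b="[]"])
     apply simp
    apply simp
    done
qed

lemma conj_inv2:
  assumes "braid_eq n (X @ [s]) ([s'] @ X)" "X \<in> braid_words n"
  shows "braid_eq n (finv X @ [s']) ([s] @ finv X)"
  apply (rule be_step[OF be_sym[OF be_inv_r[OF assms(2)]], where a="finv X @ [s']" and b="[]"])
   apply simp
  apply (rule be_step[OF be_sym[OF assms(1)], where a="finv X" and b="finv X"])
   apply simp
  apply (rule be_step[OF be_inv_l[OF assms(2)], where a="[]" and b="[s] @ finv X"])
   apply simp
  apply simp
  done

lemma flip_side:
  assumes "braid_eq n (X @ [(i, e)]) ([(i, e)] @ Y)" "1 \<le> i" "i < n"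
  shows "braid_eq n ([(i, \<not> e)] @ X) (Y @ [(i, \<not> e)])"
proof -
  have p1: "braid_eq n [(i, e), (i, \<not> e)] []" using assms by (intro be_pair)
  have p2: "braid_eq n [(i, \<not> e), (i, e)] []" using be_pair[OF assms(2,3), of "\<not> e"] by simp
  show ?thesis
    apply (rule be_step[OF be_sym[OF p1], where a="[(i, \<not> e)] @ X" and b="[]"])
     apply simp
    apply (rule be_step[OF assms(1), where a="[(i, \<not> e)]" and b="[(i, \<not> e)]"])
     apply simp
    apply (rule be_step[OF p2, where a="[]" and b="Y @ [(i, \<not> e)]"])
     apply simp
    apply simp
    done
qed

definition far :: "nat \<Rightarrow> nat \<Rightarrow> bool" where "far i j \<longleftrightarrow> i + 2 \<le> j \<or> j + 2 \<le> i"

lemma fc_FF: "1 \<le> i \<Longrightarrow> i < n \<Longrightarrow> 1 \<le> j \<Longrightarrow> j < n \<Longrightarrow> far i j \<Longrightarrow>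
  braid_eq n [(i, False), (j, False)] [(j, False), (i, False)]"
  unfolding far_def by (auto intro: braid_eq.far_comm be_sym[OF braid_eq.far_comm])

lemma swap_flip:
  assumes "braid_eq n [(i, e), b] [b, (i, e)]" "1 \<le> i" "i < n"
  shows "braid_eq n [(i, \<not> e), b] [b, (i, \<not> e)]"
  using flip_side[of n "[b]" i e "[b]"] be_sym[OF assms(1)] assms(2,3) by simp

lemma fc:
  assumes "1 \<le> i" "i < n" "1 \<le> j" "j < n" "far i j"
  shows "braid_eq n [(i, e), (j, e')] [(j, e'), (i, e)]"
proof -
  have a: "braid_eq n [(i, e), (j, False)] [(j, False), (i, e)]"
    using fc_FF[OF assms] swap_flip[of n i False "(j, False)"] assms by (cases e) auto
  have b: "braid_eq n [(j, False), (i, e)] [(i, e), (j, False)]" by (rule be_sym[OF a])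
  have "braid_eq n [(j, e'), (i, e)] [(i, e), (j, e')]"
    using b swap_flip[of n j False "(i, e)"] assms by (cases e') auto
  then show ?thesis by (rule be_sym)
qed

lemma comm_word:
  assumes "w \<in> braid_words n" "1 \<le> i" "i < n" "\<forall>l\<in>set w. far (fst l) i"
  shows "braid_eq n (w @ [(i, e)]) ([(i, e)] @ w)"
  using assms
proof (induction w)
  case Nil then show ?case by simp
next
  case (Cons x w)
  obtain j d where x: "x = (j, d)" by (cases x)
  have v: "1 \<le> j" "j < n" "far j i" "w \<in> braid_words n" using Cons.prems x by auto
  have ih: "braid_eq n (w @ [(i, e)]) ([(i, e)] @ w)" using Cons v by auto
  have f: "braid_eq n [x, (i, e)] [(i, e), x]" using v x Cons.prems by (auto intro: fc simp: far_def)
  show ?case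
    apply (rule be_step[OF ih, where a="[x]" and b="[]"])
     apply simp
    apply (rule be_step[OF f, where a="[]" and b="w"])
     apply simp
    apply simp
    done
qed

lemma dw_split: "a \<le> b \<Longrightarrow> b \<le> c \<Longrightarrow> dw a c = dw b c @ dw a b"
proof -
  assume "a \<le> b" "b \<le> c"
  then have "[a..<c] = [a..<b] @ [b..<c]" by (metis le_Suc_ex upt_add_eq_append)
  then show ?thesis by (simp add: dw_def)
qed

lemma set_dw_fst: "l \<in> set (dw a b) \<Longrightarrow> a \<le> fst l \<and> fst l < b \<and> snd l = False"
  by (auto simp: dw_def)
lemma set_dwi_fst: "l \<in> set (dwi a b) \<Longrightarrow> a \<le> fst l \<and> fst l < b \<and> snd l = True"
  by (auto simp: dwi_def)

lemma dw_two: "1 \<le> i \<Longrightarrow> dw (i - 1) (i + 1) = [(i, False), (i - 1, False)]"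
proof -
  assume "1 \<le> i"
  then have "[i - 1..<i + 1] = [i - 1, i]" by (simp add: upt_rec)
  then show ?thesis by (simp add: dw_def)
qed

lemma C3F:
  assumes "1 \<le> q" "q < i" "i < n"
  shows "braid_eq n (dw q n @ [(i, False)]) ([(i - 1, False)] @ dw q n)"
proof -
  define D1 where "D1 = dw (i + 1) n"
  define D2 where "D2 = dw q (i - 1)"
  have split: "dw q n = D1 @ [(i, False), (i - 1, False)] @ D2"
  proof -
    have "dw q n = dw (i - 1) n @ dw q (i - 1)" using assms by (intro dw_split) auto
    also have "dw (i - 1) n = dw (i + 1) n @ dw (i - 1) (i + 1)" using assms by (intro dw_split) auto
    finally show ?thesis using dw_two[of i] assms by (simp add: D1_def D2_def)
  qed
  have vD2: "D2 \<in> braid_words n" using assms by (auto simp: D2_def braid_words_def dest: set_dw_fst)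
  have vD1: "D1 \<in> braid_words n" using assms by (auto simp: D1_def braid_words_def dest: set_dw_fst)
  have c2: "braid_eq n (D2 @ [(i, False)]) ([(i, False)] @ D2)"
    using vD2 assms by (intro comm_word) (auto simp: D2_def far_def dest: set_dw_fst)
  have c1: "braid_eq n (D1 @ [(i - 1, False)]) ([(i - 1, False)] @ D1)"
    using vD1 assms by (intro comm_word) (auto simp: D1_def far_def dest: set_dw_fst)
  have br: "braid_eq n [(i, False), (i - 1, False), (i, False)] [(i - 1, False), (i, False), (i - 1, False)]"
    using braid_eq.braid_rel[of "i - 1" n] assms by (auto intro: be_sym)
  show ?thesis
    apply (rule be_step[OF c2, where a="D1 @ [(i, False), (i - 1, False)]" and b="[]"])
     apply (simp add: split)
    apply (rule be_step[OF br, where a="D1" and b="D2"])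
     apply simp
    apply (rule be_step[OF c1, where a="[]" and b="[(i, False), (i - 1, False)] @ D2"])
     apply simp
    apply (simp add: split)
    done
qed

lemma C3:
  assumes "1 \<le> q" "q < i" "i < n"
  shows "braid_eq n (dw q n @ [(i, e)]) ([(i - 1, e)] @ dw q n)"
proof (cases e)
  case False then show ?thesis using C3F[OF assms] by simp
next
  case True
  have v: "dw q n \<in> braid_words n" using assms by (intro dw_valid) auto
  have a: "braid_eq n (finv (dw q n) @ [(i - 1, False)]) ([(i, False)] @ finv (dw q n))"
    using conj_inv2[OF C3F[OF assms] v] by simp
  have b: "braid_eq n ([(i - 1, True)] @ dw q n) (dw q n @ [(i, True)])"
  proof -
    have "1 \<le> i - 1" "i - 1 < n" using assms by auto
    then show ?thesis using be_finv[OF a] v assms by (simp add: finv_append finv_Cons)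
  qed
  show ?thesis using be_sym[OF b] True by simp
qed

lemma finv_dwi: "finv (dwi a b) = dw a b" using finv_dw[of a b] finv_finv by metis

lemma finv_tau: "finv (tau n j d) = tau n j (\<not> d)"
  by (simp add: tau_def finv_append finv_dw finv_dwi finv_Cons)

definition tv :: "nat \<Rightarrow> letter list \<Rightarrow> bool" where
  "tv n u \<longleftrightarrow> (\<forall>l\<in>set u. 1 \<le> fst l \<and> fst l < n)"

lemma tv_simps[simp]: "tv n []" "tv n (x # u) \<longleftrightarrow> 1 \<le> fst x \<and> fst x < n \<and> tv n u"
  "tv n (a @ b) \<longleftrightarrow> tv n a \<and> tv n b"
  by (auto simp: tv_def)

lemma tv_finv: "tv n (finv u) \<longleftrightarrow> tv n u" by (auto simp: tv_def finv_def)

lemma finv_texp: "finv (texp n u) = texp n (finv u)"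
  by (induction u) (auto simp: texp_Cons texp_append finv_append finv_tau finv_Cons)

lemma texp_valid': "tv n u \<Longrightarrow> texp n u \<in> braid_words n"
  using texp_valid by (simp add: tv_def)

lemma texp1: "texp n [(j, d)] = tau n j d" by (simp add: texp_Cons)

lemma dw_valid': "1 \<le> p \<Longrightarrow> dw p n \<in> braid_words n" by (rule dw_valid)

lemma tau_split: "1 \<le> j \<Longrightarrow> j + 1 < n \<Longrightarrow>
  tau n j d = dw (Suc (Suc j)) n @ [(Suc j, False), (j, d), (j, d), (Suc j, True)] @ dwi (Suc (Suc j)) n"
  by (simp add: tau_def dw_step dwi_step)

lemma tau_def': "tau n j d = dw (Suc j) n @ [(j, d), (j, d)] @ dwi (Suc j) n" by (rule tau_def)

lemma C4:
  assumes "2 \<le> q" "q \<le> n"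
  shows "braid_eq n (dw q n @ [(q - 1, True)]) (tau n (q - 1) True @ dw (q - 1) n)"
proof -
  have v: "dw q n \<in> braid_words n" using assms by (intro dw_valid) auto
  have sq: "Suc (q - Suc 0) = q" using assms by simp
  have e1: "dw (q - Suc 0) n = dw q n @ [(q - Suc 0, False)]" using assms dw_step[of "q - Suc 0" n] by (simp only: sq)
  have p: "braid_eq n [(q - 1, True), (q - 1, False)] []" using be_pair[of "q - 1" n True] assms by simp
  have "braid_eq n (tau n (q - 1) True @ dw (q - 1) n) (dw q n @ [(q - 1, True)])"
    apply (rule be_step[OF be_inv_l[OF v], where a="dw q n @ [(q - 1, True), (q - 1, True)]" and b="[(q - 1, False)]"])
     using assms apply (simp add: tau_def e1 finv_dw sq)
    apply (rule be_step[OF p, where a="dw q n @ [(q - 1, True)]" and b="[]"])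
     apply simp
    apply simp
    done
  then show ?thesis by (rule be_sym)
qed

lemma C5:
  assumes "1 \<le> q" "q < n"
  shows "braid_eq n (dw q n @ [(q, False)]) (tau n q False @ dw (q + 1) n)"
proof -
  have v: "dw (q + 1) n \<in> braid_words n" by (intro dw_valid) auto
  have "braid_eq n (tau n q False @ dw (q + 1) n) (dw q n @ [(q, False)])"
    apply (rule be_step[OF be_inv_l[OF v], where a="dw (q + 1) n @ [(q, False), (q, False)]" and b="[]"])
     apply (simp add: tau_def finv_dw)
    using assms apply (simp add: dw_step)
    done
  then show ?thesis by (rule be_sym)
qed

lemma C6:
  assumes "1 \<le> q" "q < n"
  shows "braid_eq n (dw q n @ [(q, True)]) (dw (q + 1) n)"
  apply (rule be_step[OF be_pair[of q n False], where a="dw (q + 1) n" and b="[]"])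
  using assms apply (simp_all add: dw_step)
  done

lemma tau_valid': "1 \<le> j \<Longrightarrow> j < n \<Longrightarrow> tau n j d \<in> braid_words n" by (rule tau_valid)

lemma N1:
  assumes "1 \<le> j" "j < n" "1 \<le> i" "i + 1 < n" "i + 2 \<le> j \<or> j + 1 \<le> i"
  shows "braid_eq n (tau n j d @ [(i, e)]) ([(i, e)] @ tau n j d)"
  using assms(5)
proof
  assume ij: "i + 2 \<le> j"
  show ?thesis
    using assms ij by (intro comm_word tau_valid') (auto simp: tau_def far_def dest!: set_dw_fst set_dwi_fst)
next
  assume ji: "j + 1 \<le> i"
  define D where "D = dw (Suc j) n"
  have vD: "D \<in> braid_words n" by (simp add: D_def dw_valid)
  have c3: "braid_eq n (D @ [(i + 1, e)]) ([(i, e)] @ D)"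
    using C3[of "Suc j" "i + 1" n e] assms ji by (simp add: D_def)
  have c1: "braid_eq n (finv D @ [(i, e)]) ([(i + 1, e)] @ finv D)"
    using conj_inv2[OF c3 vD] .
  have c2: "braid_eq n ([(j, d), (j, d)] @ [(i + 1, e)]) ([(i + 1, e)] @ [(j, d), (j, d)])"
    using assms ji by (intro comm_word) (auto simp: far_def)
  show ?thesis
    apply (rule be_step[OF c1, where a="D @ [(j, d), (j, d)]" and b="[]"])
     apply (simp add: tau_def D_def finv_dw)
    apply (rule be_step[OF c2, where a="D" and b="finv D"])
     apply simp
    apply (rule be_step[OF c3, where a="[]" and b="[(j, d), (j, d)] @ finv D"])
     apply simp
    apply (simp add: tau_def D_def finv_dw)
    done
qed

lemma core1:
  assumes "1 \<le> j" "j + 1 < n"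
  shows "braid_eq n [(j + 1, False), (j + 1, False), (j, False)]
                     [(j, False), (j + 1, False), (j, False), (j, False), (j + 1, True)]"
proof -
  have br: "braid_eq n [(j, False), (j + 1, False), (j, False)] [(j + 1, False), (j, False), (j + 1, False)]"
    using braid_eq.braid_rel[of j n] assms by simp
  have p: "braid_eq n [(j + 1, False), (j + 1, True)] []" using be_pair[of "j + 1" n False] assms by simp
  have "braid_eq n [(j, False), (j + 1, False), (j, False), (j, False), (j + 1, True)]
                   [(j + 1, False), (j + 1, False), (j, False)]"
    apply (rule be_step[OF br, where a="[]" and b="[(j, False), (j + 1, True)]"])
     apply simp
    apply (rule be_step[OF br, where a="[(j + 1, False)]" and b="[(j + 1, True)]"])
     apply simp
    apply (rule be_step[OF p, where a="[(j + 1, False), (j + 1, False), (j, False)]" and b="[]"])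
     apply simp
    apply simp
    done
  then show ?thesis by (rule be_sym)
qed

lemma N2:
  assumes "1 \<le> j" "j + 1 < n"
  shows "braid_eq n (tau n (j + 1) False @ [(j, False)]) ([(j, False)] @ tau n j False)"
proof -
  define D where "D = dw (Suc (Suc j)) n"
  define Di where "Di = dwi (Suc (Suc j)) n"
  have vD: "D \<in> braid_words n" "Di \<in> braid_words n" by (simp_all add: D_def Di_def dw_valid dwi_valid)
  have cb1: "braid_eq n (Di @ [(j, False)]) ([(j, False)] @ Di)"
    using assms vD by (intro comm_word) (auto simp: Di_def far_def dest!: set_dwi_fst)
  have cb2: "braid_eq n (D @ [(j, False)]) ([(j, False)] @ D)"
    using assms vD by (intro comm_word) (auto simp: D_def far_def dest!: set_dw_fst)
  have t1: "tau n (Suc j) False = D @ [(Suc j, False), (Suc j, False)] @ Di"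
    by (simp add: tau_def D_def Di_def)
  have t2: "tau n j False = D @ [(Suc j, False), (j, False), (j, False), (Suc j, True)] @ Di"
    using tau_split[OF assms] by (simp add: D_def Di_def)
  show ?thesis
    apply (rule be_step[OF cb1, where a="D @ [(j + 1, False), (j + 1, False)]" and b="[]"])
     apply (simp add: t1)
    apply (rule be_step[OF core1[OF assms], where a="D" and b="Di"])
     apply simp
    apply (rule be_step[OF cb2, where a="[]" and b="[(j + 1, False), (j, False), (j, False), (j + 1, True)] @ Di"])
     apply simp
    apply (simp add: t2)
    done
qed

lemma core2:
  assumes "1 \<le> j" "j + 1 < n"
  shows "braid_eq n ([(j + 1, False), (j, False), (j, False), (j + 1, False)] @ [(j, False)])
                     ([(j, False)] @ [(j + 1, False), (j, False), (j, False), (j + 1, False)])"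
proof -
  have br: "braid_eq n [(j, False), (j + 1, False), (j, False)] [(j + 1, False), (j, False), (j + 1, False)]"
    using braid_eq.braid_rel[of j n] assms by simp
  show ?thesis
    apply (rule be_step[OF br, where a="[(j + 1, False), (j, False)]" and b="[]"])
     apply simp
    apply (rule be_step[OF be_sym[OF br], where a="[]" and b="[(j, False), (j + 1, False)]"])
     apply simp
    apply simp
    done
qed

lemma TC:
  assumes "1 \<le> j" "j + 1 < n"
  shows "braid_eq n ((tau n j False @ tau n (j + 1) False) @ [(j, False)])
                     ([(j, False)] @ (tau n j False @ tau n (j + 1) False))"
proof -
  define D where "D = dw (Suc (Suc j)) n"
  define Di where "Di = dwi (Suc (Suc j)) n"
  define M where "M = [(j + 1, False), (j, False), (j, False), (j + 1, False)]"
  have vD: "D \<in> braid_words n" "Di \<in> braid_words n" by (simp_all add: D_def Di_def dw_valid dwi_valid)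
  have cb1: "braid_eq n (Di @ [(j, False)]) ([(j, False)] @ Di)"
    using assms vD by (intro comm_word) (auto simp: Di_def far_def dest!: set_dwi_fst)
  have cb2: "braid_eq n (D @ [(j, False)]) ([(j, False)] @ D)"
    using assms vD by (intro comm_word) (auto simp: D_def far_def dest!: set_dw_fst)
  have t1: "tau n (Suc j) False = D @ [(Suc j, False), (Suc j, False)] @ Di"
    by (simp add: tau_def D_def Di_def)
  have t2: "tau n j False = D @ [(Suc j, False), (j, False), (j, False), (Suc j, True)] @ Di"
    using tau_split[OF assms] by (simp add: D_def Di_def)
  have DiD: "Di = finv D" by (simp add: D_def Di_def finv_dw)
  have p: "braid_eq n [(j + 1, True), (j + 1, False)] []" using be_pair[of "j + 1" n True] assms by simp
  have X: "braid_eq n (tau n j False @ tau n (j + 1) False) (D @ M @ Di)"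
    apply (rule be_step[OF be_inv_l[OF vD(1)], where a="D @ [(j + 1, False), (j, False), (j, False), (j + 1, True)]"
          and b="[(j + 1, False), (j + 1, False)] @ Di"])
     apply (simp add: t1 t2 DiD)
    apply (rule be_step[OF p, where a="D @ [(j + 1, False), (j, False), (j, False)]" and b="[(j + 1, False)] @ Di"])
     apply simp
    apply (simp add: M_def)
    done
  have XC: "braid_eq n ((D @ M @ Di) @ [(j, False)]) ([(j, False)] @ (D @ M @ Di))"
    apply (rule be_step[OF cb1, where a="D @ M" and b="[]"])
     apply simp
    apply (rule be_step[OF core2[OF assms], where a="D" and b="Di"])
     apply (simp add: M_def)
    apply (rule be_step[OF cb2, where a="[]" and b="M @ Di"])
     apply (simp add: M_def)
    apply simp
    done
  have "braid_eq n ((tau n j False @ tau n (j + 1) False) @ [(j, False)]) ((D @ M @ Di) @ [(j, False)])"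
    using be_app[OF X be_refl] .
  also note XC
  also have "braid_eq n ([(j, False)] @ (D @ M @ Di)) ([(j, False)] @ (tau n j False @ tau n (j + 1) False))"
    using be_app[OF be_refl be_sym[OF X]] .
  finally show ?thesis .
qed

lemma N3:
  assumes "1 \<le> j" "j + 1 < n"
  shows "braid_eq n (tau n j False @ [(j, False)])
           ([(j, False)] @ tau n j False @ tau n (j + 1) False @ tau n j True)"
proof -
  have v: "tau n j False \<in> braid_words n" using assms by (intro tau_valid') auto
  have "braid_eq n ([(j, False)] @ tau n j False @ tau n (j + 1) False @ tau n j True) (tau n j False @ [(j, False)])"
    apply (rule be_step[OF be_sym[OF TC[OF assms]], where a="[]" and b="tau n j True"])
     apply simp
    apply (rule be_step[OF N2[OF assms], where a="tau n j False" and b="tau n j True"])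
     apply simp
    apply (rule be_step[OF be_inv_r[OF v], where a="tau n j False @ [(j, False)]" and b="[]"])
     apply (simp add: finv_tau)
    apply simp
    done
  then show ?thesis by (rule be_sym)
qed

lemma PF_F:
  assumes "1 \<le> j" "j < n" "1 \<le> i" "i + 1 < n"
  shows "\<exists>v. tv n v \<and> braid_eq n (tau n j False @ [(i, False)]) ([(i, False)] @ texp n v)"
proof -
  consider "i = j" | "i + 1 = j" | "i + 2 \<le> j \<or> j + 1 \<le> i" by linarith
  then show ?thesis
  proof cases
    case 1
    then show ?thesis using N3[of j n] assms
      by (intro exI[of _ "[(j, False), (Suc j, False), (j, True)]"]) (simp add: texp_Cons)
  next
    case 2
    then show ?thesis using N2[of i n] assms
      by (intro exI[of _ "[(i, False)]"]) (simp add: texp_Cons)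
  next
    case 3
    then show ?thesis using N1[of j n i False False] assms
      by (intro exI[of _ "[(j, False)]"]) (simp add: texp_Cons)
  qed
qed

lemma PF:
  assumes "1 \<le> j" "j < n" "1 \<le> i" "i + 1 < n"
  shows "\<exists>v. tv n v \<and> braid_eq n (tau n j d @ [(i, False)]) ([(i, False)] @ texp n v)"
proof (cases d)
  case False then show ?thesis using PF_F[OF assms] by simp
next
  case True
  obtain v where v: "tv n v" "braid_eq n (tau n j False @ [(i, False)]) ([(i, False)] @ texp n v)"
    using PF_F[OF assms] by blast
  have "braid_eq n (finv (tau n j False) @ [(i, False)]) ([(i, False)] @ finv (texp n v))"
    using v assms by (intro conj_inv tau_valid' texp_valid') auto
  then show ?thesis using v True by (intro exI[of _ "finv v"]) (simp add: finv_tau finv_texp tv_finv)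
qed

lemma Zlem:
  assumes "1 \<le> i" "i + 1 < n"
  shows "braid_eq n (texp n [(i + 1, True), (i, False), (i + 1, False)] @ [(i, False)]) ([(i, False)] @ tau n (i + 1) False)"
proof -
  let ?s = "(i, False)"
  let ?A = "tau n (Suc i) False" and ?B = "tau n i False" and ?Ai = "tau n (Suc i) True" and ?Bi = "tau n i True"
  have f1: "braid_eq n (?A @ [?s]) ([?s] @ ?B)" using N2[OF assms] by simp
  have f2: "braid_eq n (?B @ [?s]) ([?s] @ ?B @ ?A @ ?Bi)" using N3[OF assms] by simp
  have vA: "?A \<in> braid_words n" "?B \<in> braid_words n" using assms by (auto intro: tau_valid')
  have f3: "braid_eq n (?Ai @ [?s]) ([?s] @ ?Bi)"
    using conj_inv[OF f1 vA(1) vA(2)] assms by (simp add: finv_tau)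
  have c: "braid_eq n (?Bi @ ?B) []" using be_inv_l[OF vA(2)] by (simp add: finv_tau)
  show ?thesis
    apply (rule be_step[OF f1, where a="?Ai @ ?B" and b="[]"])
     apply (simp add: texp_Cons)
    apply (rule be_step[OF f2, where a="?Ai" and b="?B"])
     apply simp
    apply (rule be_step[OF f3, where a="[]" and b="?B @ ?A @ ?Bi @ ?B"])
     apply simp
    apply (rule be_step[OF c, where a="[?s]" and b="?A @ ?Bi @ ?B"])
     apply simp
    apply (rule be_step[OF c, where a="[?s] @ ?A" and b="[]"])
     apply simp
    apply simp
    done
qed

lemma Q_F:
  assumes "1 \<le> j" "j < n" "1 \<le> i" "i + 1 < n"
  shows "\<exists>v. tv n v \<and> braid_eq n (texp n v @ [(i, False)]) ([(i, False)] @ tau n j False)"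
proof -
  consider "i = j" | "i + 1 = j" | "i + 2 \<le> j \<or> j + 1 \<le> i" by linarith
  then show ?thesis
  proof cases
    case 1
    then show ?thesis using N2[of j n] assms
      by (intro exI[of _ "[(Suc j, False)]"]) (simp add: texp_Cons)
  next
    case 2
    then show ?thesis using Zlem[of i n] assms
      by (intro exI[of _ "[(i + 1, True), (i, False), (i + 1, False)]"]) simp
  next
    case 3
    then show ?thesis using N1[of j n i False False] assms
      by (intro exI[of _ "[(j, False)]"]) (simp add: texp_Cons)
  qed
qed

lemma PT:
  assumes "1 \<le> j" "j < n" "1 \<le> i" "i + 1 < n"
  shows "\<exists>v. tv n v \<and> braid_eq n (tau n j d @ [(i, True)]) ([(i, True)] @ texp n v)"
proof -
  have "\<exists>v. tv n v \<and> braid_eq n (texp n v @ [(i, False)]) ([(i, False)] @ tau n j d)"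
  proof (cases d)
    case False then show ?thesis using Q_F[OF assms] by simp
  next
    case True
    obtain v where v: "tv n v" "braid_eq n (texp n v @ [(i, False)]) ([(i, False)] @ tau n j False)"
      using Q_F[OF assms] by blast
    have "braid_eq n (finv (texp n v) @ [(i, False)]) ([(i, False)] @ finv (tau n j False))"
      using v assms by (intro conj_inv tau_valid' texp_valid') auto
    then show ?thesis using v True by (intro exI[of _ "finv v"]) (simp add: finv_tau finv_texp tv_finv)
  qed
  then obtain v where v: "tv n v" "braid_eq n (texp n v @ [(i, False)]) ([(i, False)] @ tau n j d)" by blast
  have "braid_eq n ([(i, True)] @ texp n v) (tau n j d @ [(i, True)])"
    using flip_side[OF v(2)] assms by simp
  then show ?thesis using v(1) by (intro exI[of _ v]) (simp add: be_sym)
qed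

lemma PL:
  assumes "1 \<le> j" "j < n" "1 \<le> i" "i + 1 < n"
  shows "\<exists>v. tv n v \<and> braid_eq n (tau n j d @ [(i, e)]) ([(i, e)] @ texp n v)"
  using PF[OF assms] PT[OF assms] by (cases e) auto

lemma PW:
  assumes "tv n u" "1 \<le> i" "i + 1 < n"
  shows "\<exists>u'. tv n u' \<and> braid_eq n (texp n u @ [(i, e)]) ([(i, e)] @ texp n u')"
  using assms(1)
proof (induction u)
  case Nil then show ?case by (intro exI[of _ "[]"]) simp
next
  case (Cons l u)
  obtain u' where u': "tv n u'" "braid_eq n (texp n u @ [(i, e)]) ([(i, e)] @ texp n u')"
    using Cons by auto
  obtain v where v: "tv n v" "braid_eq n (tau n (fst l) (snd l) @ [(i, e)]) ([(i, e)] @ texp n v)"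
    using PL[of "fst l" n i "snd l" e] Cons.prems assms by auto
  have "braid_eq n (texp n (l # u) @ [(i, e)]) ([(i, e)] @ texp n (v @ u'))"
    apply (rule be_step[OF u'(2), where a="tau n (fst l) (snd l)" and b="[]"])
     apply (simp add: texp_Cons)
    apply (rule be_step[OF v(2), where a="[]" and b="texp n u'"])
     apply simp
    apply (simp add: texp_append)
    done
  then show ?case using u' v by (intro exI[of _ "v @ u'"]) simp
qed

lemma texp_cancel:
  assumes "1 \<le> fst x" "fst x < n" "tv n r"
  shows "braid_eq n (tau n (fst x) (snd x) @ texp n r) (texp n (cancel x r))"
proof (cases r)
  case Nil then show ?thesis by (simp add: texp_Cons)
next
  case (Cons y r')
  show ?thesis
  proof (cases "cancels x y")
    case True
    then have ty: "tau n (fst y) (snd y) = finv (tau n (fst x) (snd x))"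
      by (auto simp: cancels_def finv_tau)
    have v: "tau n (fst x) (snd x) \<in> braid_words n" using assms by (intro tau_valid') auto
    show ?thesis
      apply (rule be_step[OF be_inv_r[OF v], where a="[]" and b="texp n r'"])
       apply (simp add: Cons texp_Cons ty)
      using True Cons apply (simp add: cancel_simp)
      done
  next
    case False then show ?thesis using Cons by (simp add: cancel_simp texp_Cons)
  qed
qed

lemma tv_fred: "tv n u \<Longrightarrow> tv n (fred u)"
  using set_fred[of u] by (auto simp: tv_def)

lemma texp_fred: "tv n u \<Longrightarrow> braid_eq n (texp n u) (texp n (fred u))"
proof (induction u)
  case Nil then show ?case by (simp add: fred_def)
next
  case (Cons x u)
  have tu: "tv n u" using Cons.prems by simp
  have "braid_eq n (texp n (x # u)) (tau n (fst x) (snd x) @ texp n (fred u))"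
    using be_app[OF be_refl Cons.IH[OF tu]] by (simp add: texp_Cons)
  also have "braid_eq n (tau n (fst x) (snd x) @ texp n (fred u)) (texp n (cancel x (fred u)))"
    using Cons.prems tv_fred[OF tu] by (intro texp_cancel) auto
  finally show ?case by (simp add: fred_Cons)
qed

lemma RW:
  assumes "\<beta> \<in> braid_words n" "1 \<le> n"
  shows "\<exists>t u q. t \<in> braid_words (n - 1) \<and> tv n u \<and> 1 \<le> q \<and> q \<le> n \<and>
           braid_eq n \<beta> (t @ texp n u @ dw q n)"
  using assms(1)
proof (induction \<beta> rule: rev_induct)
  case Nil
  then show ?case using assms(2) by (intro exI[of _ "[]"] exI[of _ "[]"] exI[of _ n]) simp
next
  case (snoc s \<beta>0)
  obtain i e where s: "s = (i, e)" by (cases s)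
  have si: "1 \<le> i" "i < n" and vb0: "\<beta>0 \<in> braid_words n" using snoc.prems s by auto
  obtain t u q where tuq: "t \<in> braid_words (n - 1)" "tv n u" "1 \<le> q" "q \<le> n"
    and h: "braid_eq n \<beta>0 (t @ texp n u @ dw q n)" using snoc.IH[OF vb0] by blast
  have h1: "braid_eq n (\<beta>0 @ [s]) (t @ texp n u @ dw q n @ [(i, e)])"
    using be_app[OF h be_refl[of n "[s]"]] s by simp
  consider "i + 1 < q" | "i + 1 = q" "\<not> e" | "i + 1 = q" "e" | "i = q" "\<not> e" | "i = q" "e" | "q < i"
    by (cases e) linarith+
  then show ?case
  proof cases
    case 1
    obtain u' where u': "tv n u'" "braid_eq n (texp n u @ [(i, e)]) ([(i, e)] @ texp n u')"
      using PW[OF tuq(2) si(1), of e] 1 tuq by auto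
    have cs: "braid_eq n (dw q n @ [(i, e)]) ([(i, e)] @ dw q n)"
      using 1 si tuq by (intro comm_word dw_valid) (auto simp: far_def dest!: set_dw_fst)
    have "braid_eq n (\<beta>0 @ [s]) ((t @ [(i, e)]) @ texp n u' @ dw q n)"
      apply (rule be_trans[OF h1])
      apply (rule be_step[OF cs, where a="t @ texp n u" and b="[]"])
       apply simp
      apply (rule be_step[OF u'(2), where a="t" and b="dw q n"])
       apply simp
      apply simp
      done
    moreover have "t @ [(i, e)] \<in> braid_words (n - 1)" using tuq 1 si by auto
    ultimately show ?thesis using u' tuq by blast
  next
    case 2
    have "dw q n @ [(i, e)] = dw i n" using 2 si dw_step[of i n] by simp
    then have "braid_eq n (\<beta>0 @ [s]) (t @ texp n u @ dw i n)" using h1 by simp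
    then show ?thesis using tuq si by (intro exI[of _ t] exI[of _ u] exI[of _ i]) simp
  next
    case 3
    have qi: "q = Suc i" "e" using 3 by auto
    have c0: "braid_eq n (dw q n @ [(q - 1, True)]) (tau n (q - 1) True @ dw (q - 1) n)"
      using 3 si tuq by (intro C4) auto
    have c: "braid_eq n (dw q n @ [(i, e)]) (tau n i True @ dw i n)"
      using c0 qi by simp
    have "braid_eq n (\<beta>0 @ [s]) (t @ texp n (u @ [(i, True)]) @ dw i n)"
      apply (rule be_trans[OF h1])
      apply (rule be_step[OF c, where a="t @ texp n u" and b="[]"])
       apply simp
      apply (simp add: texp_append texp1)
      done
    then show ?thesis using tuq si 3 by (intro exI[of _ t] exI[of _ "u @ [(i, True)]"] exI[of _ i]) simp
  next
    case 4
    have c: "braid_eq n (dw q n @ [(q, False)]) (tau n q False @ dw (q + 1) n)"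
      using 4 si tuq by (intro C5) auto
    have c': "braid_eq n (dw q n @ [(i, e)]) (tau n q False @ dw (q + 1) n)"
      using c 4 by simp
    have "braid_eq n (\<beta>0 @ [s]) (t @ texp n (u @ [(q, False)]) @ dw (q + 1) n)"
      apply (rule be_trans[OF h1])
      apply (rule be_step[OF c', where a="t @ texp n u" and b="[]"])
       apply simp
      apply (simp add: texp_append texp1)
      done
    then show ?thesis using tuq si 4 by (intro exI[of _ t] exI[of _ "u @ [(q, False)]"] exI[of _ "q + 1"]) simp
  next
    case 5
    have c: "braid_eq n (dw q n @ [(q, True)]) (dw (q + 1) n)"
      using 5 si tuq by (intro C6) auto
    have c': "braid_eq n (dw q n @ [(i, e)]) (dw (q + 1) n)"
      using c 5 by simp
    have "braid_eq n (\<beta>0 @ [s]) (t @ texp n u @ dw (q + 1) n)"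
      apply (rule be_trans[OF h1])
      apply (rule be_step[OF c', where a="t @ texp n u" and b="[]"])
       apply simp
      apply simp
      done
    then show ?thesis using tuq si 5 by (intro exI[of _ t] exI[of _ u] exI[of _ "q + 1"]) simp
  next
    case 6
    have c: "braid_eq n (dw q n @ [(i, e)]) ([(i - 1, e)] @ dw q n)"
      using 6 si tuq by (intro C3) auto
    obtain u' where u': "tv n u'" "braid_eq n (texp n u @ [(i - 1, e)]) ([(i - 1, e)] @ texp n u')"
    proof -
      have a: "1 \<le> i - 1" "i - 1 + 1 < n" using 6 tuq si by auto
      show ?thesis using PW[OF tuq(2) a, of e] that by blast
    qed
    have "braid_eq n (\<beta>0 @ [s]) ((t @ [(i - 1, e)]) @ texp n u' @ dw q n)"
      apply (rule be_trans[OF h1])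
      apply (rule be_step[OF c, where a="t @ texp n u" and b="[]"])
       apply simp
      apply (rule be_step[OF u'(2), where a="t" and b="dw q n"])
       apply simp
      apply simp
      done
    moreover have "t @ [(i - 1, e)] \<in> braid_words (n - 1)" using tuq 6 si by auto
    ultimately show ?thesis using u' tuq by blast
  qed
qed

lemma hl_app_tail:
  assumes "1 \<le> fst s" "fst s < length xs"
  shows "hl s (xs @ ys) = hl s xs @ ys"
proof -
  obtain i e where s: "s = (i, e)" by (cases s)
  show ?thesis using assms s by (cases e) (auto simp: list_update_append nth_append)
qed

lemma H_app_tail: "w \<in> braid_words (length xs) \<Longrightarrow> H w (xs @ ys) = H w xs @ ys"
  by (induction w) (auto simp: hl_app_tail)

lemma FB_Suc: "FB (Suc m) = FB m @ [gen (Suc m)]"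
  by (simp add: FB_def)

lemma H_last:
  assumes "t \<in> braid_words (n - 1)" "length y = n" "1 \<le> n"
  shows "H t y ! (n - 1) = y ! (n - 1)"
proof -
  have y: "y = butlast y @ [last y]" using assms by (metis append_butlast_last_id list.size(3) not_one_le_zero)
  have "H t y = H t (butlast y) @ [last y]"
    using H_app_tail[of t "butlast y" "[last y]"] assms y by (metis length_butlast)
  then show ?thesis using assms y
    by (metis H_app_tail length_butlast length_H nth_append_length)
qed

lemma braid_eq_mono: "braid_eq m u v \<Longrightarrow> m \<le> n \<Longrightarrow> braid_eq n u v"
proof (induction rule: braid_eq.induct)
  case (refl w) then show ?case by simp
next
  case (sym u v) then show ?case by (blast intro: be_sym)
next
  case (trans u v w) then show ?case by (blast intro: be_trans)
next
  case (ctxt u v a b) then show ?case by (blast intro: braid_eq.ctxt)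
next
  case (cancel_rel i e) then show ?case by (intro be_pair) auto
next
  case (far_comm i j) then show ?case by (intro braid_eq.far_comm) auto
next
  case (braid_rel i) then show ?case by (intro braid_eq.braid_rel) auto
qed

lemma bw_mono: "w \<in> braid_words m \<Longrightarrow> m \<le> n \<Longrightarrow> w \<in> braid_words n"
  by (auto simp: braid_words_def)

lemma set_tau_ge: "l \<in> set (tau n j d) \<Longrightarrow> j \<le> fst l"
  by (auto simp: tau_def dest!: set_dw_fst set_dwi_fst)

lemma set_texp_ge: "l \<in> set (texp n u) \<Longrightarrow> \<exists>x\<in>set u. fst x \<le> fst l"
  by (auto simp: texp_def dest!: set_tau_ge)

lemma triv: "\<beta> \<in> braid_words n \<Longrightarrow> in_Bk_Bnk n n \<beta>"
  unfolding in_Bk_Bnk_def by (intro bexI[of _ \<beta>]) (auto simp: braid_words_def)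

lemma lets_sub_FB: "tv n u \<Longrightarrow> lets (sub (FB n) u) = fst ` set (fred u)"
  by (simp add: lets_def sub_FB_rep tv_def less_imp_le)

lemma core: "k \<le> n \<Longrightarrow> \<beta> \<in> braid_words n \<Longrightarrow> blk n k (H \<beta> (FB n)) \<Longrightarrow> in_Bk_Bnk n k \<beta>"
proof (induction n arbitrary: k \<beta>)
  case 0 then show ?case using triv by simp
next
  case (Suc m)
  let ?n = "Suc m"
  show ?case
  proof (cases "k = ?n")
    case True then show ?thesis using triv Suc.prems by simp
  next
    case False
    then have km: "k \<le> m" using Suc.prems by simp
    obtain t u q where tuq: "t \<in> braid_words m" "tv ?n u" "1 \<le> q" "q \<le> ?n"
      and h: "braid_eq ?n \<beta> (t @ texp ?n u @ dw q ?n)"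
      using RW[OF Suc.prems(2)] by auto
    define U where "U = texp ?n u"
    define C where "C = dw q ?n"
    define FBn where "FBn = FB ?n"
    have lFBn: "length FBn = ?n" by (simp add: FBn_def)
    have vU: "U \<in> braid_words ?n" using tuq by (simp add: U_def texp_valid')
    have vC: "C \<in> braid_words ?n" using tuq by (simp add: C_def dw_valid)
    have vt: "t \<in> braid_words ?n" using tuq by (auto intro: bw_mono)
    have vt': "t \<in> braid_words (?n - 1)" using tuq by simp
    have blkB: "blk ?n k (H \<beta> FBn)" using Suc.prems by (simp add: FBn_def)
    have HB: "H \<beta> FBn = H t (H U (H C FBn))"
      using braid_eq_H[OF h Suc.prems(2) _ lFBn] vt vU vC by (simp add: H_append U_def C_def)
    obtain W where I1: "map (S (fbz ?n)) (H U FBn) = fbz ?n"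
      and W: "lets W \<subseteq> {1..?n}" "H U FBn ! (?n - 1) = W + gen ?n - W" "S (fbz ?n) W = sub (FB ?n) u"
      using tau_inv[of ?n u] tuq by (auto simp: U_def FBn_def tv_def)
    define Y where "Y = H C FBn"
    have lY: "length Y = ?n" by (simp add: Y_def lFBn)
    have Yn: "Y ! (?n - 1) = gen q"
      using E1[of q ?n FBn] tuq lFBn by (simp add: Y_def C_def FBn_def)
    have "H \<beta> FBn ! (?n - 1) = H U Y ! (?n - 1)"
      using HB H_last[OF vt' _] lY by (simp add: Y_def)
    also have "H U Y = map (S Y) (H U FBn)" using H_subst[OF vU lY] by (simp add: FBn_def)
    finally have ent: "H \<beta> FBn ! (?n - 1) = S Y W + gen q - S Y W" using W(2) Yn lFBn by simp
    have lastblk: "lets (x ! m) \<subseteq> {k+1..?n}" if "blk ?n k x" for x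
    proof -
      have "lets (x ! m) \<subseteq> bs ?n k m" using that unfolding blk_def by simp
      then show ?thesis using km by (simp add: bs_def)
    qed
    have "lets (S Y W + gen q - S Y W) \<subseteq> {k+1..?n}" using lastblk[OF blkB] ent by simp
    then have "q \<in> {k+1..?n}" by (rule conj_lets)
    then have qk: "k < q" by simp
    have vfC: "finv C \<in> braid_words ?n" using vC by simp
    have e1: "braid_eq ?n (\<beta> @ finv C) (t @ U)"
      apply (rule be_trans[OF be_app[OF h be_refl]])
      apply (rule be_step[OF be_inv_r[OF vC], where a="t @ U" and b="[]"])
       apply (simp add: U_def C_def)
      apply simp
      done
    have blkZ: "blk ?n k (H (finv C) FBn)"
      unfolding FBn_def
    proof (rule blk_H[OF blk_FB[of k ?n]])
      show "\<forall>l\<in>set (finv C). fst l \<noteq> k" using qk by (auto simp: C_def finv_dw dest!: set_dwi_fst)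
    qed (use Suc.prems vfC in auto)
    have HB': "H (t @ U) FBn = map (S (H (finv C) FBn)) (H \<beta> FBn)"
    proof -
      have "H (t @ U) FBn = H (\<beta> @ finv C) FBn"
        using braid_eq_H[OF e1 _ _ lFBn] Suc.prems vfC vt vU by simp
      also have "\<dots> = H \<beta> (H (finv C) FBn)" by (simp add: H_append)
      also have "\<dots> = map (S (H (finv C) FBn)) (H \<beta> FBn)"
        using H_subst[OF Suc.prems(2), of "H (finv C) FBn"] lFBn by (simp add: FBn_def)
      finally show ?thesis .
    qed
    have blkB': "blk ?n k (H (t @ U) FBn)"
      unfolding HB' using blk_map_S[OF blkZ _ blkB] lFBn Suc.prems by simp
    have "H (t @ U) FBn ! (?n - 1) = H U FBn ! (?n - 1)"
      using H_last[OF vt'] lFBn by (simp add: H_append)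
    then have "lets (W + gen ?n - W) \<subseteq> {k+1..?n}"
      using lastblk[OF blkB'] W(2) by simp
    then have "lets (S (fbz ?n) W) \<subseteq> {k+1..?n}" using strip[OF W(1)] by simp
    then have fu: "fst ` set (fred u) \<subseteq> {k+1..?n}" using W(3) lets_sub_FB[OF tuq(2)] by simp
    define V where "V = texp ?n (fred u)"
    have tvf: "tv ?n (fred u)" using tv_fred[OF tuq(2)] .
    have vV: "V \<in> braid_words ?n" using tvf by (simp add: V_def texp_valid')
    have UV: "braid_eq ?n U V" using texp_fred[OF tuq(2)] by (simp add: U_def V_def)
    have Vk: "\<forall>l\<in>set V. fst l \<noteq> k"
    proof
      fix l assume "l \<in> set V"
      then have "l \<in> set (texp ?n (fred u))" by (simp add: V_def)
      then obtain x where "x \<in> set (fred u)" "fst x \<le> fst l" using set_texp_ge by blast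
      then show "fst l \<noteq> k" using fu by force
    qed
    have e2: "braid_eq ?n (t @ U @ finv V) t"
      apply (rule be_step[OF UV, where a="t" and b="finv V"])
       apply simp
      apply (rule be_step[OF be_inv_r[OF vV], where a="t" and b="[]"])
       apply simp
      apply simp
      done
    have vfV: "finv V \<in> braid_words ?n" using vV by simp
    have blkZ': "blk ?n k (H (finv V) FBn)"
      unfolding FBn_def
    proof (rule blk_H[OF blk_FB[of k ?n]])
      show "\<forall>l\<in>set (finv V). fst l \<noteq> k" using Vk by (auto simp: finv_def)
    qed (use Suc.prems vfV in auto)
    have Ht: "H t FBn = map (S (H (finv V) FBn)) (H (t @ U) FBn)"
    proof -
      have "H t FBn = H ((t @ U) @ finv V) FBn"
        using braid_eq_H[OF e2 _ vt lFBn] vU vfV vt by simp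
      also have "\<dots> = H (t @ U) (H (finv V) FBn)" by (simp add: H_append)
      also have "\<dots> = map (S (H (finv V) FBn)) (H (t @ U) FBn)"
        using H_subst[of "t @ U" ?n "H (finv V) FBn"] vt vU lFBn by (simp add: FBn_def)
      finally show ?thesis .
    qed
    have blkt: "blk ?n k (H t FBn)"
      unfolding Ht using blk_map_S[OF blkZ' _ blkB'] lFBn Suc.prems by simp
    have Htm: "H t FBn = H t (FB m) @ [gen ?n]"
      using H_app_tail[of t "FB m" "[gen ?n]"] tuq by (simp add: FBn_def FB_Suc)
    have blkm: "blk m k (H t (FB m))"
      unfolding blk_def
    proof (intro allI impI)
      fix j assume j: "j < m"
      have "H t FBn ! j = H t (FB m) ! j" using Htm j by (simp add: nth_append)
      then have a: "lets (H t (FB m) ! j) \<subseteq> bs ?n k j"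
        using blkt j unfolding blk_def by (metis less_SucI)
      have b: "lets (H t (FB m) ! j) \<subseteq> {1..m}" using ent_H_FB[OF tuq(1) j] .
      have c: "bs ?n k j \<inter> {1..m} \<subseteq> bs m k j" using km by (auto simp: bs_def)
      show "lets (H t (FB m) ! j) \<subseteq> bs m k j" using a b c by blast
    qed
    obtain w where w: "w \<in> braid_words m" "\<forall>l\<in>set w. fst l \<noteq> k" "braid_eq m t w"
      using Suc.IH[OF km tuq(1) blkm] unfolding in_Bk_Bnk_def by blast
    have wn: "braid_eq ?n t w" using braid_eq_mono[OF w(3)] by simp
    have fin: "braid_eq ?n \<beta> (w @ V @ C)"
      apply (rule be_trans[OF h])
      apply (rule be_step[OF UV, where a="t" and b="C"])
       apply (simp add: U_def C_def)
      apply (rule be_step[OF wn, where a="[]" and b="V @ C"])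
       apply simp
      apply simp
      done
    have Ck: "\<forall>l\<in>set C. fst l \<noteq> k" using qk by (auto simp: C_def dest!: set_dw_fst)
    have "w @ V @ C \<in> braid_words ?n" using w(1) vV vC by (auto intro: bw_mono)
    moreover have "\<forall>l\<in>set (w @ V @ C). fst l \<noteq> k" using w(2) Vk Ck by auto
    ultimately show ?thesis unfolding in_Bk_Bnk_def using fin by blast
  qed
qed

lemma forward: "in_Bk_Bnk n k \<beta> \<Longrightarrow> k \<le> n \<Longrightarrow> \<beta> \<in> braid_words n \<Longrightarrow> blk n k (H \<beta> (FB n))"
proof -
  assume a: "in_Bk_Bnk n k \<beta>" "k \<le> n" "\<beta> \<in> braid_words n"
  then obtain w where w: "w \<in> braid_words n" "\<forall>l\<in>set w. fst l \<noteq> k" "braid_eq n \<beta> w"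
    unfolding in_Bk_Bnk_def by blast
  have "H \<beta> (FB n) = H w (FB n)" using braid_eq_H[OF w(3) a(3) w(1)] by simp
  moreover have "blk n k (H w (FB n))" using blk_H[OF blk_FB[OF a(2)] _ w(1) w(2)] by simp
  ultimately show ?thesis by simp
qed

lemma gen_sub_rep: "rep g \<in> gen_sub L \<longleftrightarrow> lets g \<subseteq> L"
proof
  assume "rep g \<in> gen_sub L"
  then obtain w where "rep g = fred w" "\<forall>l\<in>set w. fst l \<in> L" by (auto simp: gen_sub_def)
  then show "lets g \<subseteq> L" using set_fred[of w] by (auto simp: lets_def)
next
  assume "lets g \<subseteq> L"
  then show "rep g \<in> gen_sub L" unfolding gen_sub_def lets_def
    by (intro CollectI exI[of _ "rep g"]) (auto simp: fred_red)
qed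

theorem lemma5p1:
  fixes n k :: nat and \<beta> :: "letter list"
  assumes "k \<le> n" and "\<beta> \<in> braid_words n"
  shows "in_Bk_Bnk n k \<beta> \<longleftrightarrow>
    ((\<forall>j < k. hurwitz \<beta> (free_basis n) ! j \<in> gen_sub {1..k}) \<and>
     (\<forall>j. k \<le> j \<and> j < n \<longrightarrow> hurwitz \<beta> (free_basis n) ! j \<in> gen_sub {k+1..n}))"
proof -
  have eqH: "hurwitz \<beta> (free_basis n) = map rep (H \<beta> (FB n))"
    using hurwitz_rep[of \<beta> "FB n"] assms by (simp add: free_basis_FB)
  have mem: "hurwitz \<beta> (free_basis n) ! j \<in> gen_sub L \<longleftrightarrow> lets (H \<beta> (FB n) ! j) \<subseteq> L" if "j < n" for j L
    using that by (simp add: eqH gen_sub_rep)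
  let ?x = "H \<beta> (FB n)"
  have A: "(\<forall>j < k. hurwitz \<beta> (free_basis n) ! j \<in> gen_sub {1..k}) \<longleftrightarrow> (\<forall>j < k. lets (?x ! j) \<subseteq> {1..k})"
  proof -
    have "hurwitz \<beta> (free_basis n) ! j \<in> gen_sub {1..k} \<longleftrightarrow> lets (?x ! j) \<subseteq> {1..k}" if "j < k" for j
      using mem[of j "{1..k}"] that assms(1) by simp
    then show ?thesis by blast
  qed
  have B: "(\<forall>j. k \<le> j \<and> j < n \<longrightarrow> hurwitz \<beta> (free_basis n) ! j \<in> gen_sub {k+1..n}) \<longleftrightarrow>
           (\<forall>j. k \<le> j \<and> j < n \<longrightarrow> lets (?x ! j) \<subseteq> {k+1..n})"
  proof -
    have "hurwitz \<beta> (free_basis n) ! j \<in> gen_sub {k+1..n} \<longleftrightarrow> lets (?x ! j) \<subseteq> {k+1..n}" if "j < n" for j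
      using mem[of j "{k+1..n}"] that by simp
    then show ?thesis by blast
  qed
  have C: "((\<forall>j < k. lets (?x ! j) \<subseteq> {1..k}) \<and> (\<forall>j. k \<le> j \<and> j < n \<longrightarrow> lets (?x ! j) \<subseteq> {k+1..n}))
           \<longleftrightarrow> blk n k ?x"
  proof
    assume a: "(\<forall>j < k. lets (?x ! j) \<subseteq> {1..k}) \<and> (\<forall>j. k \<le> j \<and> j < n \<longrightarrow> lets (?x ! j) \<subseteq> {k+1..n})"
    show "blk n k ?x" unfolding blk_def bs_def
    proof (intro allI impI)
      fix j assume "j < n"
      then show "lets (?x ! j) \<subseteq> (if j < k then {1..k} else {k + 1..n})" using a by (cases "j < k") auto
    qed
  next
    assume b: "blk n k ?x"
    have "lets (?x ! j) \<subseteq> {1..k}" if "j < k" for j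
      using b that assms(1) unfolding blk_def bs_def by (metis (full_types) less_le_trans)
    moreover have "lets (?x ! j) \<subseteq> {k+1..n}" if "k \<le> j" "j < n" for j
      using b that unfolding blk_def bs_def by (metis (full_types) not_le)
    ultimately show "(\<forall>j < k. lets (?x ! j) \<subseteq> {1..k}) \<and> (\<forall>j. k \<le> j \<and> j < n \<longrightarrow> lets (?x ! j) \<subseteq> {k+1..n})"
      by blast
  qed
  have rhs: "((\<forall>j < k. hurwitz \<beta> (free_basis n) ! j \<in> gen_sub {1..k}) \<and>
     (\<forall>j. k \<le> j \<and> j < n \<longrightarrow> hurwitz \<beta> (free_basis n) ! j \<in> gen_sub {k+1..n}))
     \<longleftrightarrow> blk n k (H \<beta> (FB n))"
    using A B C by simp
  show ?thesis unfolding rhs using core[OF assms] forward[OF _ assms] by blast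
qed

end
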